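(* Let $d,T,T_{\mathrm{off}}$ be positive integers and $v\in[0,1]^d$ with $\sum_{i=1}^dv_i\le1$. Then the minimax regret of the problem class $\mathcal{P}^d_{v,T_{\mathrm{off}},T}$ (defined in the context) satisfies $$\mathcal{R}_{\mathrm{minmax}}(\mathcal{P}^d_{v,T_{\mathrm{off}},T})\ge\frac{\sqrt{T}e^{-2}}{8}\sup_{\substack{w\in\Delta_d\\ w_i\ge v_i\ \forall i}}\sum_{i=1}^d\frac{1}{\sqrt{1+\frac{T_{\mathrm{off}}}{T}\frac{v_i}{w_i}}},$$ where $\Delta_d$ is the probability simplex in $\mathbb{R}^d$.
   Context: A problem instance is $p=(\pi_{\mathrm{off}},\mathcal{A},\theta,T_{\mathrm{off}},T)$ with $\mathcal{A}\subset\mathbb{R}^d$ finite, $\pi_{\mathrm{off}}$ a probability measure on $\mathcal{A}$, $\theta\in\mathbb{R}^d$: pulling arm $a$ gives reward $\langle\theta,a\rangle$ plus independent zero-mean $1$-sub-Gaussian noise; the learner receives $T_{\mathrm{off}}$ offline samples collected non-adaptively with $\pi_{\mathrm{off}}(a)T_{\mathrm{off}}$ samples from arm $a$, then plays $T$ online rounds $a_1,\dots,a_T$. The regret of algorithm $S$ on $p$ is $\mathcal{R}_p(T,S)=T\max_{a\in\mathcal{A}}\langle\theta,a\rangle-\sum_{t=1}^T\mathbb{E}[\langle\theta,a_t\rangle]$ (expectation over offline and online noise and the algorithm's randomness). With $V_{\pi_{\mathrm{off}}}=\sum_a\pi_{\mathrm{off}}(a)aa^\top$ and $\lambda_i$ its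 $i$-th smallest eigenvalue, the class $\mathcal{P}^d_{v,T_{\mathrm{off}},T}$ consists of all instances in dimension $d$ with the given $T_{\mathrm{off}},T$, with $|\mathcal{A}|\le(2d)^d$, and with $\lambda_i(V_{\pi_{\mathrm{off}}})/\max_{a\in\mathcal{A}}\|a\|^2=v_i$ for all $i\in[d]$. The minimax regret is $\mathcal{R}_{\mathrm{minmax}}(\mathcal{P}^d_{v,T_{\mathrm{off}},T})=\inf_{S}\sup_{p\in\mathcal{P}^d_{v,T_{\mathrm{off}},T}}\mathcal{R}_p(T,S)$, the infimum over all (possibly adaptive) algorithms for horizon $T$ that take the $T_{\mathrm{off}}$ offline samples as input. *)

theory Defs
  imports "HOL-Probability.Probability" "HOL-Computational_Algebra.Polynomial"
begin

type_synonym 'd arm = "real ^ ('d::finite)"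

text \<open>History: list of (arm, observed reward) pairs.  The first entries are the
  offline samples (in a fixed order), the remaining ones the online rounds.\<close>
type_synonym 'd hist = "('d arm \<times> real) list"

type_synonym 'd alg = "'d arm set \<Rightarrow> 'd hist \<Rightarrow> 'd arm pmf"

text \<open>Noise: standard Gaussian (a zero-mean 1-sub-Gaussian distribution).\<close>
definition noise :: "real measure" where
  "noise = density lborel std_normal_density"

text \<open>Expected cumulative online reward.  Forced arms \<open>bs\<close> are the offline samples
  still to be drawn (no reward counted), \<open>k\<close> is the number of online rounds left.\<close>
fun exp_reward :: "('d::finite) alg \<Rightarrow> 'd arm set \<Rightarrow> 'd arm \<Rightarrow> 'd arm list \<Rightarrow> nat \<Rightarrow> 'd hist \<Rightarrow> real" where
  "exp_reward S A \<theta> [] 0 h = 0"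
| "exp_reward S A \<theta> [] (Suc k) h =
     measure_pmf.expectation (S A h)
       (\<lambda>a. \<theta> \<bullet> a + (\<integral>y. exp_reward S A \<theta> [] k (h @ [(a, \<theta> \<bullet> a + y)]) \<partial>noise))"
| "exp_reward S A \<theta> (b # bs) k h =
     (\<integral>y. exp_reward S A \<theta> bs k (h @ [(b, \<theta> \<bullet> b + y)]) \<partial>noise)"

definition offline_arms :: "('d::finite) arm set \<Rightarrow> ('d arm \<Rightarrow> real) \<Rightarrow> nat \<Rightarrow> 'd arm list" where
  "offline_arms A \<pi> Toff =
     (SOME xs. \<forall>a. count (mset xs) a = (if a \<in> A then nat \<lfloor>\<pi> a * real Toff\<rfloor> else 0))"

definition regret :: "('d::finite) arm set \<Rightarrow> ('d arm \<Rightarrow> real) \<Rightarrow> 'd arm \<Rightarrow> nat \<Rightarrow> nat \<Rightarrow> 'd alg \<Rightarrow> real" where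
  "regret A \<pi> \<theta> Toff T S =
     real T * Max ((\<lambda>a. \<theta> \<bullet> a) ` A) - exp_reward S A \<theta> (offline_arms A \<pi> Toff) T []"

text \<open>Admissible algorithms: they only play arms of the action set and are
  measurable (so that the expectations are genuine expectations).\<close>
definition admissible :: "('d::finite) alg \<Rightarrow> bool" where
  "admissible S \<longleftrightarrow>
     (\<forall>A h. finite A \<and> A \<noteq> {} \<longrightarrow> set_pmf (S A h) \<subseteq> A) \<and>
     (\<forall>A \<theta> bs k h b. finite A \<and> A \<noteq> {} \<longrightarrow>
        (\<lambda>y. exp_reward S A \<theta> bs k (h @ [(b, \<theta> \<bullet> b + y)])) \<in> borel_measurable borel)"

definition cov_matrix :: "('d::finite) arm set \<Rightarrow> ('d arm \<Rightarrow> real) \<Rightarrow> real ^ 'd ^ 'd" where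
  "cov_matrix A \<pi> = (\<chi> i j. \<Sum>a\<in>A. \<pi> a * (a $ i) * (a $ j))"

definition char_poly :: "real ^ ('d::finite) ^ 'd \<Rightarrow> real poly" where
  "char_poly M = det (\<chi> i j. (if i = j then [:0, 1:] else 0) - [:M $ i $ j:])"

text \<open>Eigenvalues counted with algebraic multiplicity, in increasing order
  (index 0 = smallest).\<close>
definition sorted_eigenvalues :: "real ^ ('d::finite) ^ 'd \<Rightarrow> real list" where
  "sorted_eigenvalues M = sorted_list_of_multiset (proots (char_poly M))"

definition in_class :: "nat \<Rightarrow> (nat \<Rightarrow> real) \<Rightarrow> ('d::finite) arm set \<Rightarrow> ('d arm \<Rightarrow> real) \<Rightarrow> 'd arm \<Rightarrow> bool" where
  "in_class Toff v A \<pi> \<theta> \<longleftrightarrow>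
     finite A \<and> A \<noteq> {} \<and> card A \<le> (2 * CARD('d)) ^ CARD('d) \<and>
     (\<forall>a. 0 \<le> \<pi> a) \<and> (\<forall>a. a \<notin> A \<longrightarrow> \<pi> a = 0) \<and> (\<Sum>a\<in>A. \<pi> a) = 1 \<and>
     (\<forall>i < CARD('d). sorted_eigenvalues (cov_matrix A \<pi>) ! i / Max ((\<lambda>a. (norm a)\<^sup>2) ` A) = v i)"

definition minimax_regret :: "('d::finite) itself \<Rightarrow> (nat \<Rightarrow> real) \<Rightarrow> nat \<Rightarrow> nat \<Rightarrow> ereal" where
  "minimax_regret _ v Toff T =
     (INF S \<in> {S :: 'd alg. admissible S}.
        SUP p \<in> {(A, \<pi>, \<theta>). in_class Toff v A \<pi> \<theta>}.
          ereal (regret (fst p) (fst (snd p)) (snd (snd p)) Toff T S))"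

end

theory Submission
  imports Defs
begin


definition Hm :: "real \<Rightarrow> real \<Rightarrow> real" where "Hm x y = x * y / (x + y)"
definition aff :: "real \<Rightarrow> real" where "aff d = max 0 ((3 - exp (d\<^sup>2)) / 2)"

lemma Hm_nonneg: "0 \<le> x \<Longrightarrow> 0 \<le> y \<Longrightarrow> 0 \<le> Hm x y"
  by (simp add: Hm_def)

lemma Hm_le_min: "0 \<le> x \<Longrightarrow> 0 \<le> y \<Longrightarrow> Hm x y \<le> min x y"
proof -
  assume x: "0 \<le> x" and y: "0 \<le> y"
  show ?thesis
  proof (cases "x + y = 0")
    case True then show ?thesis using x y by (simp add: Hm_def)
  next
    case False
    then have s: "x + y > 0" using x y by linarith
    have "x * y \<le> x * (x + y)" using x y by (simp add: mult_left_mono)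
    moreover have "x * y \<le> y * (x + y)" using x y by (simp add: mult_right_mono algebra_simps)
    ultimately show ?thesis using s by (simp add: Hm_def divide_le_eq)
  qed
qed

lemma nd_def1: "normal_density \<mu> 1 z = exp (-(z - \<mu>)\<^sup>2 / 2) / sqrt (2 * pi)"
  by (simp add: normal_density_def)

lemma nd_pos: "0 < normal_density \<mu> 1 z"
  by (simp add: normal_density_pos)

lemma exp_sq_div: "(exp (a::real))\<^sup>2 / exp b = exp (2 * a - b)"
proof -
  have "exp (2 * a - b) = exp (a + a) / exp b" by (simp only: mult_2 exp_diff)
  also have "exp (a + a) = exp a * exp a" by (rule exp_add)
  finally show ?thesis by (simp add: power2_eq_square)
qed

lemma nd_sq_div:
  "(normal_density \<mu>' 1 z)\<^sup>2 / normal_density \<mu> 1 z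
     = exp ((\<mu> - \<mu>')\<^sup>2) * normal_density (2 * \<mu>' - \<mu>) 1 z"
proof -
  have sp: "sqrt (2 * pi) > 0" by simp
  have "(normal_density \<mu>' 1 z)\<^sup>2 / normal_density \<mu> 1 z
      = (exp (-(z - \<mu>')\<^sup>2 / 2))\<^sup>2 / exp (-(z - \<mu>)\<^sup>2 / 2) / sqrt (2 * pi)"
    using sp by (simp add: nd_def1 power2_eq_square field_simps)
  also have "(exp (-(z - \<mu>')\<^sup>2 / 2))\<^sup>2 / exp (-(z - \<mu>)\<^sup>2 / 2)
      = exp (2 * (-(z - \<mu>')\<^sup>2 / 2) - (-(z - \<mu>)\<^sup>2 / 2))"
    by (rule exp_sq_div)
  also have "2 * (-(z - \<mu>')\<^sup>2 / 2) - (-(z - \<mu>)\<^sup>2 / 2)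
      = (\<mu> - \<mu>')\<^sup>2 + (-(z - (2 * \<mu>' - \<mu>))\<^sup>2 / 2)"
    by (simp add: power2_eq_square field_simps)
  also have "exp ((\<mu> - \<mu>')\<^sup>2 + (-(z - (2 * \<mu>' - \<mu>))\<^sup>2 / 2)) / sqrt (2 * pi)
     = exp ((\<mu> - \<mu>')\<^sup>2) * (exp (-(z - (2 * \<mu>' - \<mu>))\<^sup>2 / 2) / sqrt (2 * pi))"
    by (simp only: exp_add) simp
  finally show ?thesis
    by (simp only: nd_def1)
qed

lemma Hm_pointwise:
  fixes x y p q :: real
  assumes x: "0 \<le> x" and y: "0 \<le> y" and p: "0 < p" and q: "0 < q"
  shows "Hm (x * p) (y * q) \<ge> Hm x y * ((x * q + y * p) / (x + y) - (q\<^sup>2 / p + p\<^sup>2 / q - p - q) / 4)"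
proof (cases "x + y = 0")
  case True
  then have "x = 0" "y = 0" using x y by auto
  then show ?thesis by (simp add: Hm_def)
next
  case False
  then have s: "x + y > 0" using x y by linarith
  define w1 where "w1 = x / (x + y)"
  define w2 where "w2 = y / (x + y)"
  have w1: "0 \<le> w1" and w2: "0 \<le> w2" using x y s by (auto simp: w1_def w2_def)
  have w12: "w1 + w2 = 1" using s by (simp add: w1_def w2_def add_divide_distrib[symmetric])
  define AM where "AM = w1 * q + w2 * p"
  define t where "t = w1 * w2 * (p - q)\<^sup>2 / (p * q)"
  define K where "K = (q\<^sup>2 / p + p\<^sup>2 / q - p - q) / 4"
  have AM0: "0 \<le> AM" using w1 w2 p q by (simp add: AM_def)
  have t0: "0 \<le> t" using w1 w2 p q by (simp add: t_def)
  have den: "w1 / q + w2 / p > 0"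
  proof -
    have "w1 / q + w2 / p = (w1 * p + w2 * q) / (p * q)" using p q by (simp add: field_simps)
    moreover have "w1 * p + w2 * q > 0"
    proof (cases "w1 = 0")
      case True then have "w2 = 1" using w12 by simp
      then show ?thesis using True q by simp
    next
      case False then have "w1 > 0" using w1 by simp
      then show ?thesis using p w2 q by (simp add: add_pos_nonneg)
    qed
    ultimately show ?thesis using p q by simp
  qed
  have key: "AM * (w1 / q + w2 / p) = 1 + t"
  proof -
    have "AM * (w1 / q + w2 / p) = w1 * w1 + w2 * w2 + w1 * w2 * (q / p + p / q)"
      using p q by (simp add: AM_def field_simps)
    also have "w1 * w1 + w2 * w2 = (w1 + w2)\<^sup>2 - 2 * w1 * w2" by (simp add: power2_eq_square algebra_simps)
    also have "q / p + p / q = 2 + (p - q)\<^sup>2 / (p * q)"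
      using p q by (simp add: field_simps power2_eq_square)
    finally show ?thesis using w12 by (simp add: t_def algebra_simps)
  qed
  have r: "Hm (x * p) (y * q) = Hm x y * (1 / (w1 / q + w2 / p))"
  proof -
    have gen: "\<And>D::real. D > 0 \<Longrightarrow> (x / D) / q + (y / D) / p = (x * p + y * q) / (D * (p * q))"
      using p q by (simp add: field_simps)
    have e1: "w1 / q + w2 / p = (x * p + y * q) / ((x + y) * (p * q))"
      unfolding w1_def w2_def by (rule gen[OF s])
    have pos: "x * p + y * q > 0"
    proof (cases "x = 0")
      case True then show ?thesis using s q by simp
    next
      case False then show ?thesis using x y p q by (simp add: add_pos_nonneg)
    qed
    have gen2: "\<And>D E::real. D > 0 \<Longrightarrow> E > 0 \<Longrightarrow> x * y / D * (1 / (E / (D * (p * q)))) = x * p * (y * q) / E"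
      using p q by (simp add: field_simps)
    show ?thesis unfolding e1 Hm_def by (rule gen2[OF s pos, symmetric])
  qed
  have r2: "1 / (w1 / q + w2 / p) = AM / (1 + t)"
    using key den t0 by (simp add: field_simps)
  have r3: "AM / (1 + t) \<ge> AM - AM * t"
  proof -
    have "(AM - AM * t) * (1 + t) = AM - AM * t\<^sup>2" by (simp add: algebra_simps power2_eq_square)
    also have "\<dots> \<le> AM" using AM0 t0 by simp
    finally show ?thesis using t0 by (simp add: field_simps)
  qed
  have w4: "w1 * w2 \<le> 1 / 4"
  proof -
    have "0 \<le> (w1 - w2)\<^sup>2" by simp
    then have "4 * (w1 * w2) \<le> (w1 + w2)\<^sup>2" by (simp add: power2_eq_square algebra_simps)
    then show ?thesis using w12 by simp
  qed
  have AMle: "AM \<le> p + q"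
  proof -
    have "w1 * q \<le> q" using w1 w2 w12 q by (simp add: mult_left_le_one_le)
    moreover have "w2 * p \<le> p" using w1 w2 w12 p by (simp add: mult_left_le_one_le)
    ultimately show ?thesis by (simp add: AM_def)
  qed
  have r4: "AM * t \<le> K"
  proof -
    have "AM * t = (w1 * w2) * (AM * ((p - q)\<^sup>2 / (p * q)))" by (simp add: t_def algebra_simps)
    also have "\<dots> \<le> (1/4) * (AM * ((p - q)\<^sup>2 / (p * q)))"
      by (rule mult_right_mono[OF w4]) (use AM0 p q in simp)
    also have "\<dots> \<le> (1/4) * ((p + q) * ((p - q)\<^sup>2 / (p * q)))"
      by (intro mult_left_mono mult_right_mono AMle) (use p q in auto)
    also have "(p + q) * ((p - q)\<^sup>2 / (p * q)) = q\<^sup>2 / p + p\<^sup>2 / q - p - q"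
      using p q by (simp add: field_simps power2_eq_square)
    finally show ?thesis by (simp add: K_def)
  qed
  have "1 / (w1 / q + w2 / p) \<ge> AM - K" using r2 r3 r4 by linarith
  moreover have "AM = (x * q + y * p) / (x + y)" by (simp add: AM_def w1_def w2_def add_divide_distrib)
  ultimately have "1 / (w1 / q + w2 / p) \<ge> (x * q + y * p) / (x + y) - K" by simp
  then show ?thesis unfolding r K_def[symmetric]
    by (intro mult_left_mono Hm_nonneg x y)
qed

lemma borel_measurable_Hm[measurable]:
  fixes f g :: "'a \<Rightarrow> real"
  assumes [measurable]: "f \<in> borel_measurable M" "g \<in> borel_measurable M"
  shows "(\<lambda>z. Hm (f z) (g z)) \<in> borel_measurable M"
  unfolding Hm_def by measurable

lemma hb_nd: "has_bochner_integral lborel (\<lambda>z. normal_density \<mu> 1 z) 1"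
  by (simp add: has_bochner_integral_iff)

lemma aff_integrable:
  assumes "0 \<le> x" "0 \<le> y"
  shows "integrable lborel (\<lambda>z. Hm (x * normal_density \<mu> 1 z) (y * normal_density \<mu>' 1 z))"
proof -
  have i1: "integrable lborel (\<lambda>z. x * normal_density \<mu> 1 z)" by simp
  show ?thesis
  proof (rule Bochner_Integration.integrable_bound[OF i1])
  show "(\<lambda>z. Hm (x * normal_density \<mu> 1 z) (y * normal_density \<mu>' 1 z)) \<in> borel_measurable lborel"
    by measurable
  show "AE z in lborel. norm (Hm (x * normal_density \<mu> 1 z) (y * normal_density \<mu>' 1 z)) \<le> norm (x * normal_density \<mu> 1 z)"
  proof (rule AE_I2)
    fix z
    have a: "0 \<le> x * normal_density \<mu> 1 z" "0 \<le> y * normal_density \<mu>' 1 z" using assms by auto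
    show "norm (Hm (x * normal_density \<mu> 1 z) (y * normal_density \<mu>' 1 z)) \<le> norm (x * normal_density \<mu> 1 z)"
      using Hm_le_min[OF a] Hm_nonneg[OF a] a by simp
  qed
  qed
qed

lemma aff_integral:
  assumes x: "0 \<le> x" and y: "0 \<le> y"
  shows "aff (\<mu> - \<mu>') * Hm x y \<le> (\<integral>z. Hm (x * normal_density \<mu> 1 z) (y * normal_density \<mu>' 1 z) \<partial>lborel)"
proof -
  let ?F = "\<lambda>z. Hm (x * normal_density \<mu> 1 z) (y * normal_density \<mu>' 1 z)"
  have int: "integrable lborel ?F" by (rule aff_integrable[OF x y])
  have F0: "0 \<le> integral\<^sup>L lborel ?F"
    using x y by (simp add: Hm_nonneg)
  have main: "Hm x y * ((3 - exp ((\<mu> - \<mu>')\<^sup>2)) / 2) \<le> integral\<^sup>L lborel ?F"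
  proof (cases "x + y = 0")
    case True
    then have "x = 0" "y = 0" using x y by auto
    then show ?thesis using F0 by (simp add: Hm_def)
  next
    case False
    then have s: "x + y > 0" using x y by linarith
    define E where "E = exp ((\<mu> - \<mu>')\<^sup>2)"
    let ?p = "normal_density \<mu> 1" and ?q = "normal_density \<mu>' 1"
    define L where "L = (\<lambda>z. Hm x y * ((x / (x + y)) * ?q z + (y / (x + y)) * ?p z
         - (E * normal_density (2 * \<mu>' - \<mu>) 1 z + E * normal_density (2 * \<mu> - \<mu>') 1 z - ?p z - ?q z) / 4))"
    have hbL: "has_bochner_integral lborel L (Hm x y * ((x / (x + y)) * 1 + (y / (x + y)) * 1 - (E * 1 + E * 1 - 1 - 1) / 4))"
      unfolding L_def
      by (intro has_bochner_integral_mult_right has_bochner_integral_add has_bochner_integral_diff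
            has_bochner_integral_divide_zero hb_nd)
    have valL: "integral\<^sup>L lborel L = Hm x y * ((3 - E) / 2)"
    proof -
      have "(x / (x + y)) * 1 + (y / (x + y)) * 1 = 1" using s by (simp add: add_divide_distrib[symmetric])
      moreover have "1 - (E * 1 + E * 1 - 1 - 1) / 4 = (3 - E) / (2::real)" by (simp add: field_simps)
      ultimately show ?thesis using has_bochner_integral_integral_eq[OF hbL] by (simp only:)
    qed
    have "integral\<^sup>L lborel L \<le> integral\<^sup>L lborel ?F"
    proof (rule integral_mono)
      show "integrable lborel L" using hbL by (rule integrable.intros)
      show "integrable lborel ?F" by (rule int)
      fix z
      have pz: "0 < ?p z" and qz: "0 < ?q z" by (simp_all add: nd_pos)
      have e1: "(?q z)\<^sup>2 / ?p z = E * normal_density (2 * \<mu>' - \<mu>) 1 z"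
        unfolding E_def by (rule nd_sq_div)
      have e2: "(?p z)\<^sup>2 / ?q z = E * normal_density (2 * \<mu> - \<mu>') 1 z"
        unfolding E_def using nd_sq_div[where \<mu>=\<mu>' and \<mu>'=\<mu> and z=z] by (simp add: power2_commute)
      have "Hm x y * ((x * ?q z + y * ?p z) / (x + y) - ((?q z)\<^sup>2 / ?p z + (?p z)\<^sup>2 / ?q z - ?p z - ?q z) / 4) \<le> ?F z"
        using Hm_pointwise[OF x y pz qz] by simp
      moreover have "(x * ?q z + y * ?p z) / (x + y) = (x / (x + y)) * ?q z + (y / (x + y)) * ?p z"
        by (simp add: add_divide_distrib)
      ultimately show "L z \<le> ?F z" unfolding L_def e1 e2 by simp
    qed
    then show ?thesis using valL by (simp add: E_def)
  qed
  show ?thesis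
  proof (cases "(3 - exp ((\<mu> - \<mu>')\<^sup>2)) / 2 \<ge> 0")
    case True then show ?thesis using main by (simp add: aff_def mult.commute)
  next
    case False then show ?thesis using F0 by (simp add: aff_def)
  qed
qed


lemma noise_prob: "prob_space noise"
  unfolding noise_def using prob_space_normal_density[of 1 0] by simp

lemma int_abs_le_const:
  fixes f :: "'a \<Rightarrow> real"
  assumes "prob_space M" and b: "\<And>x. \<bar>f x\<bar> \<le> C"
  shows "\<bar>integral\<^sup>L M f\<bar> \<le> C"
proof (cases "integrable M f")
  case True
  interpret prob_space M by fact
  have "\<bar>integral\<^sup>L M f\<bar> \<le> integral\<^sup>L M (\<lambda>x. \<bar>f x\<bar>)" by (rule integral_abs_bound)
  also have "\<dots> \<le> integral\<^sup>L M (\<lambda>x. C)"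
    by (rule integral_mono) (use True b in auto)
  also have "\<dots> = C" by (simp add: prob_space)
  finally show ?thesis .
next
  case False
  then show ?thesis using b[of undefined] by (simp add: not_integrable_integral_eq)
qed

lemma noise_shift:
  fixes F :: "real \<Rightarrow> real"
  assumes m: "(\<lambda>y. F (c + y)) \<in> borel_measurable borel"
  shows "(\<integral>y. F (c + y) \<partial>noise) = (\<integral>z. normal_density c 1 z * F z \<partial>lborel)"
proof -
  have "(\<integral>y. F (c + y) \<partial>noise) = (\<integral>y. normal_density 0 1 y * F (c + y) \<partial>lborel)"
    unfolding noise_def using m by (subst integral_density) auto
  also have "\<dots> = (\<integral>x. normal_density c 1 (c + 1 * x) * F (c + 1 * x) \<partial>lborel)"
    by (simp add: normal_density_def)
  also have "\<dots> = (\<integral>z. normal_density c 1 z * F z \<partial>lborel)"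
    using lborel_integral_real_affine[of 1 "\<lambda>z. normal_density c 1 z * F z" c] by simp
  finally show ?thesis .
qed

lemma adm_set: assumes "admissible S" "finite A" "A \<noteq> {}" shows "set_pmf (S A h) \<subseteq> A"
proof -
  have "\<forall>A h. finite A \<and> A \<noteq> {} \<longrightarrow> set_pmf (S A h) \<subseteq> A"
    using assms(1) unfolding admissible_def by (rule conjunct1)
  then show ?thesis using assms(2,3) by blast
qed

lemma adm_meas0: assumes "admissible S" "finite A" "A \<noteq> {}" shows
   "(\<lambda>y. exp_reward S A \<theta> bs k (h @ [(b, \<theta> \<bullet> b + y)])) \<in> borel_measurable borel"
proof -
  have "\<forall>A \<theta> bs k h b. finite A \<and> A \<noteq> {} \<longrightarrow>
        (\<lambda>y. exp_reward S A \<theta> bs k (h @ [(b, \<theta> \<bullet> b + y)])) \<in> borel_measurable borel"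
    using assms(1) unfolding admissible_def by (rule conjunct2)
  then show ?thesis using assms(2,3) by blast
qed

lemma adm_meas: 
  assumes "admissible S" "finite A" "A \<noteq> {}"
  shows "(\<lambda>z. exp_reward S A \<theta> bs k (h @ [(b, z)])) \<in> borel_measurable borel"
proof -
  have m: "(\<lambda>y. exp_reward S A \<theta> bs k (h @ [(b, \<theta> \<bullet> b + y)])) \<in> borel_measurable borel"
    by (rule adm_meas0[OF assms])
  have "(\<lambda>z. (\<lambda>y. exp_reward S A \<theta> bs k (h @ [(b, \<theta> \<bullet> b + y)])) (z - \<theta> \<bullet> b)) \<in> borel_measurable borel"
    by (rule measurable_compose[OF _ m]) simp
  then show ?thesis by simp
qed

lemma pmf_expect_sum:
  assumes "admissible S" "finite A" "A \<noteq> {}"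
  shows "measure_pmf.expectation (S A h) f = (\<Sum>a\<in>A. pmf (S A h) a * f a)"
  using integral_measure_pmf[OF assms(2), of "S A h" f] adm_set[OF assms, of h] by auto

lemma pmf_sum1:
  assumes "admissible S" "finite A" "A \<noteq> {}"
  shows "(\<Sum>a\<in>A. pmf (S A h) a) = 1"
  by (rule sum_pmf_eq_1[OF assms(2) adm_set[OF assms]])

definition Bd :: "'d::finite arm set \<Rightarrow> 'd arm \<Rightarrow> real" where
  "Bd A \<theta> = Max ((\<lambda>a. \<bar>\<theta> \<bullet> a\<bar>) ` A)"

lemma Bd_ge: "finite A \<Longrightarrow> a \<in> A \<Longrightarrow> \<bar>\<theta> \<bullet> a\<bar> \<le> Bd A \<theta>"
  unfolding Bd_def by (rule Max_ge) auto

lemma exp_bound_online: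
  assumes adm: "admissible S" and fin: "finite A" and ne: "A \<noteq> {}"
  shows "\<bar>exp_reward S A \<theta> [] k h\<bar> \<le> real k * Bd A \<theta>"
proof (induction k arbitrary: h)
  case 0
  then show ?case by simp
next
  case (Suc k)
  let ?J = "\<lambda>a. \<integral>y. exp_reward S A \<theta> [] k (h @ [(a, \<theta> \<bullet> a + y)]) \<partial>noise"
  have J: "\<bar>?J a\<bar> \<le> real k * Bd A \<theta>" for a
    by (rule int_abs_le_const[OF noise_prob]) (rule Suc.IH)
  have "exp_reward S A \<theta> [] (Suc k) h = (\<Sum>a\<in>A. pmf (S A h) a * (\<theta> \<bullet> a + ?J a))"
    by (simp only: exp_reward.simps pmf_expect_sum[OF adm fin ne])
  also have "\<bar>\<dots>\<bar> \<le> (\<Sum>a\<in>A. pmf (S A h) a * (real (Suc k) * Bd A \<theta>))"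
  proof -
    have "\<bar>\<Sum>a\<in>A. pmf (S A h) a * (\<theta> \<bullet> a + ?J a)\<bar> \<le> (\<Sum>a\<in>A. \<bar>pmf (S A h) a * (\<theta> \<bullet> a + ?J a)\<bar>)"
      by (rule sum_abs)
    also have "\<dots> \<le> (\<Sum>a\<in>A. pmf (S A h) a * (real (Suc k) * Bd A \<theta>))"
    proof (rule sum_mono)
      fix a assume a: "a \<in> A"
      have "\<bar>\<theta> \<bullet> a + ?J a\<bar> \<le> real (Suc k) * Bd A \<theta>"
        using Bd_ge[OF fin a, of \<theta>] J[of a] by (simp add: algebra_simps)
      then show "\<bar>pmf (S A h) a * (\<theta> \<bullet> a + ?J a)\<bar> \<le> pmf (S A h) a * (real (Suc k) * Bd A \<theta>)"
        by (simp add: abs_mult mult_left_mono)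
    qed
    finally show ?thesis .
  qed
  also have "\<dots> = (\<Sum>a\<in>A. pmf (S A h) a) * (real (Suc k) * Bd A \<theta>)"
    by (rule sum_distrib_right[symmetric])
  also have "\<dots> = real (Suc k) * Bd A \<theta>"
    by (simp only: pmf_sum1[OF adm fin ne] mult_1)
  finally show ?case .
qed

lemma exp_bound:
  assumes adm: "admissible S" and fin: "finite A" and ne: "A \<noteq> {}"
  shows "\<bar>exp_reward S A \<theta> bs k h\<bar> \<le> real k * Bd A \<theta>"
proof (induction bs arbitrary: h)
  case Nil
  then show ?case by (rule exp_bound_online[OF assms])
next
  case (Cons b bs)
  show ?case
    unfolding exp_reward.simps by (rule int_abs_le_const[OF noise_prob], rule Cons.IH)
qed


definition PS :: "(('d::finite \<Rightarrow> bool) \<Rightarrow> real) \<Rightarrow> 'd \<Rightarrow> real" where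
  "PS l i = (\<Sum>\<sigma>\<in>{\<sigma>. \<sigma> i}. Hm (l \<sigma>) (l (\<sigma>(i := False))))"

fun cc :: "('d::finite \<Rightarrow> real) \<Rightarrow> ('d \<Rightarrow> real) \<Rightarrow> nat \<Rightarrow> 'd \<Rightarrow> real" where
  "cc g r 0 i = 0"
| "cc g r (Suc k) i = g i + r i * cc g r k i"

lemma cc_nonneg: "(\<And>i. 0 \<le> g i) \<Longrightarrow> (\<And>i. 0 \<le> r i) \<Longrightarrow> 0 \<le> cc g r k i"
  by (induction k) auto

lemma PS_nonneg: "(\<And>\<sigma>. 0 \<le> l \<sigma>) \<Longrightarrow> 0 \<le> PS l i"
  unfolding PS_def by (intro sum_nonneg Hm_nonneg) auto

lemma int_step:
  fixes E :: "('d::finite \<Rightarrow> bool) \<Rightarrow> real \<Rightarrow> real" and \<mu> :: "('d \<Rightarrow> bool) \<Rightarrow> real"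
    and M :: "('d \<Rightarrow> bool) \<Rightarrow> real" and c \<rho> :: "'d \<Rightarrow> real" and lam :: "('d \<Rightarrow> bool) \<Rightarrow> real"
  assumes meas: "\<And>\<sigma>. E \<sigma> \<in> borel_measurable borel"
    and bnd: "\<And>\<sigma> z. \<bar>E \<sigma> z\<bar> \<le> C"
    and lam: "\<And>\<sigma>. 0 \<le> lam \<sigma>"
    and c0: "\<And>i. 0 \<le> c i"
    and rho: "\<And>\<sigma> i. \<sigma> i \<Longrightarrow> \<rho> i \<le> aff (\<mu> \<sigma> - \<mu> (\<sigma>(i := False)))"
    and pt: "\<And>z l. (\<And>\<sigma>. 0 \<le> l \<sigma>) \<Longrightarrow>
        (\<Sum>\<sigma>\<in>UNIV. l \<sigma> * E \<sigma> z) \<le> (\<Sum>\<sigma>\<in>UNIV. l \<sigma> * M \<sigma>) - (\<Sum>i\<in>UNIV. c i * PS l i)"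
  shows "(\<Sum>\<sigma>\<in>UNIV. lam \<sigma> * (\<integral>z. normal_density (\<mu> \<sigma>) 1 z * E \<sigma> z \<partial>lborel))
          \<le> (\<Sum>\<sigma>\<in>UNIV. lam \<sigma> * M \<sigma>) - (\<Sum>i\<in>UNIV. c i * \<rho> i * PS lam i)"
proof -
  define l where "l z \<sigma> = lam \<sigma> * normal_density (\<mu> \<sigma>) 1 z" for z \<sigma>
  have l0: "0 \<le> l z \<sigma>" for z \<sigma> using lam by (simp add: l_def)
  have intE: "integrable lborel (\<lambda>z. normal_density (\<mu> \<sigma>) 1 z * E \<sigma> z)" for \<sigma>
  proof -
    have i1: "integrable lborel (\<lambda>z. C * normal_density (\<mu> \<sigma>) 1 z)" by simp
    show ?thesis
    proof (rule Bochner_Integration.integrable_bound[OF i1])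
      show "(\<lambda>z. normal_density (\<mu> \<sigma>) 1 z * E \<sigma> z) \<in> borel_measurable lborel"
        using meas[of \<sigma>] by simp
      show "AE z in lborel. norm (normal_density (\<mu> \<sigma>) 1 z * E \<sigma> z) \<le> norm (C * normal_density (\<mu> \<sigma>) 1 z)"
      proof (rule AE_I2)
        fix z
        have "\<bar>normal_density (\<mu> \<sigma>) 1 z * E \<sigma> z\<bar> \<le> normal_density (\<mu> \<sigma>) 1 z * C"
          unfolding abs_mult using bnd[of \<sigma> z] by (simp add: mult_left_mono)
        also have "\<dots> \<le> normal_density (\<mu> \<sigma>) 1 z * \<bar>C\<bar>" by (rule mult_left_mono) simp_all
        also have "\<dots> = \<bar>C * normal_density (\<mu> \<sigma>) 1 z\<bar>" by (simp add: abs_mult)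
        finally show "norm (normal_density (\<mu> \<sigma>) 1 z * E \<sigma> z) \<le> norm (C * normal_density (\<mu> \<sigma>) 1 z)"
          by simp
      qed
    qed
  qed
  have intH: "integrable lborel (\<lambda>z. Hm (l z \<sigma>) (l z (\<sigma>(i := False))))" for \<sigma> i
    unfolding l_def using aff_integrable[OF lam lam] by simp
  have intPS: "integrable lborel (\<lambda>z. PS (l z) i)" for i
    unfolding PS_def using intH by (intro Bochner_Integration.integrable_sum) auto
  define U where "U z = (\<Sum>\<sigma>\<in>UNIV. l z \<sigma> * M \<sigma>) - (\<Sum>i\<in>UNIV. c i * PS (l z) i)" for z
  have intU: "integrable lborel U"
    unfolding U_def using intPS by (intro Bochner_Integration.integrable_diff Bochner_Integration.integrable_sum Bochner_Integration.integrable_mult_right) (auto simp: l_def)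
  have lhs: "(\<Sum>\<sigma>\<in>UNIV. lam \<sigma> * (\<integral>z. normal_density (\<mu> \<sigma>) 1 z * E \<sigma> z \<partial>lborel))
      = (\<integral>z. (\<Sum>\<sigma>\<in>UNIV. l z \<sigma> * E \<sigma> z) \<partial>lborel)"
  proof -
    have "(\<Sum>\<sigma>\<in>UNIV. lam \<sigma> * (\<integral>z. normal_density (\<mu> \<sigma>) 1 z * E \<sigma> z \<partial>lborel))
       = (\<Sum>\<sigma>\<in>UNIV. (\<integral>z. lam \<sigma> * (normal_density (\<mu> \<sigma>) 1 z * E \<sigma> z) \<partial>lborel))"
      by simp
    also have "\<dots> = (\<integral>z. (\<Sum>\<sigma>\<in>UNIV. lam \<sigma> * (normal_density (\<mu> \<sigma>) 1 z * E \<sigma> z)) \<partial>lborel)"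
      by (rule Bochner_Integration.integral_sum[symmetric]) (use intE in auto)
    finally show ?thesis by (simp add: l_def mult.assoc)
  qed
  have intL: "integrable lborel (\<lambda>z. (\<Sum>\<sigma>\<in>UNIV. l z \<sigma> * E \<sigma> z))"
    unfolding l_def using intE by (auto simp: mult.assoc)
  have mono: "(\<integral>z. (\<Sum>\<sigma>\<in>UNIV. l z \<sigma> * E \<sigma> z) \<partial>lborel) \<le> integral\<^sup>L lborel U"
    by (rule integral_mono[OF intL intU]) (simp add: U_def pt l0)
  have U1: "integral\<^sup>L lborel U = (\<Sum>\<sigma>\<in>UNIV. lam \<sigma> * M \<sigma>) - (\<Sum>i\<in>UNIV. c i * (\<integral>z. PS (l z) i \<partial>lborel))"
  proof -
    have a: "(\<integral>z. (\<Sum>\<sigma>\<in>UNIV. l z \<sigma> * M \<sigma>) \<partial>lborel) = (\<Sum>\<sigma>\<in>UNIV. lam \<sigma> * M \<sigma>)"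
      by (subst Bochner_Integration.integral_sum) (auto simp: l_def)
    have b: "(\<integral>z. (\<Sum>i\<in>UNIV. c i * PS (l z) i) \<partial>lborel) = (\<Sum>i\<in>UNIV. c i * (\<integral>z. PS (l z) i \<partial>lborel))"
      by (subst Bochner_Integration.integral_sum) (use intPS in auto)
    have i1: "integrable lborel (\<lambda>z. (\<Sum>\<sigma>\<in>UNIV. l z \<sigma> * M \<sigma>))" by (auto simp: l_def)
    have i2: "integrable lborel (\<lambda>z. (\<Sum>i\<in>UNIV. c i * PS (l z) i))" using intPS by auto
    show ?thesis unfolding U_def using a b i1 i2 by simp
  qed
  have PSint: "\<rho> i * PS lam i \<le> (\<integral>z. PS (l z) i \<partial>lborel)" for i
  proof -
    have "(\<integral>z. PS (l z) i \<partial>lborel) = (\<Sum>\<sigma>\<in>{\<sigma>. \<sigma> i}. (\<integral>z. Hm (l z \<sigma>) (l z (\<sigma>(i := False))) \<partial>lborel))"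
      unfolding PS_def by (rule Bochner_Integration.integral_sum) (use intH in auto)
    also have "\<dots> \<ge> (\<Sum>\<sigma>\<in>{\<sigma>. \<sigma> i}. \<rho> i * Hm (lam \<sigma>) (lam (\<sigma>(i := False))))"
    proof (rule sum_mono)
      fix \<sigma> assume s: "\<sigma> \<in> {\<sigma>. \<sigma> i}"
      have "\<rho> i * Hm (lam \<sigma>) (lam (\<sigma>(i := False))) \<le> aff (\<mu> \<sigma> - \<mu> (\<sigma>(i := False))) * Hm (lam \<sigma>) (lam (\<sigma>(i := False)))"
        using rho[of \<sigma> i] s by (intro mult_right_mono Hm_nonneg lam) auto
      also have "\<dots> \<le> (\<integral>z. Hm (l z \<sigma>) (l z (\<sigma>(i := False))) \<partial>lborel)"
        unfolding l_def by (rule aff_integral[OF lam lam])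
      finally show "\<rho> i * Hm (lam \<sigma>) (lam (\<sigma>(i := False))) \<le> (\<integral>z. Hm (l z \<sigma>) (l z (\<sigma>(i := False))) \<partial>lborel)" .
    qed
    finally show ?thesis by (simp only: PS_def[of lam] sum_distrib_left)
  qed
  have "(\<Sum>i\<in>UNIV. c i * \<rho> i * PS lam i) \<le> (\<Sum>i\<in>UNIV. c i * (\<integral>z. PS (l z) i \<partial>lborel))"
    by (rule sum_mono) (simp add: mult.assoc mult_left_mono[OF PSint c0])
  then show ?thesis using lhs mono U1 by linarith
qed

definition Mx :: "'d::finite arm set \<Rightarrow> 'd arm \<Rightarrow> real" where
  "Mx A \<theta> = Max ((\<lambda>a. \<theta> \<bullet> a) ` A)"

lemma Bd_nonneg: "finite A \<Longrightarrow> A \<noteq> {} \<Longrightarrow> 0 \<le> Bd A \<theta>"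
  using Bd_ge[of A _ \<theta>] by (meson abs_ge_zero all_not_in_conv order_trans)

lemma exp_bound_unif:
  fixes th :: "('d::finite \<Rightarrow> bool) \<Rightarrow> 'd arm"
  assumes adm: "admissible S" and fin: "finite A" and ne: "A \<noteq> {}"
  shows "\<bar>exp_reward S A (th \<sigma>) bs k h\<bar> \<le> real k * (\<Sum>\<tau>\<in>UNIV. Bd A (th \<tau>))"
proof -
  have "Bd A (th \<sigma>) \<le> (\<Sum>\<tau>\<in>UNIV. Bd A (th \<tau>))"
    by (rule member_le_sum) (auto intro: Bd_nonneg[OF fin ne])
  then have "real k * Bd A (th \<sigma>) \<le> real k * (\<Sum>\<tau>\<in>UNIV. Bd A (th \<tau>))"
    by (rule mult_left_mono) simp
  then show ?thesis using exp_bound[OF assms, of "th \<sigma>" bs k h] by linarith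
qed

lemma online:
  fixes th :: "('d::finite \<Rightarrow> bool) \<Rightarrow> 'd arm"
  assumes adm: "admissible S" and fin: "finite A" and ne: "A \<noteq> {}"
    and R: "\<And>a l. a \<in> A \<Longrightarrow> (\<And>\<sigma>. 0 \<le> l \<sigma>) \<Longrightarrow>
       (\<Sum>i\<in>UNIV. g i * PS l i) \<le> (\<Sum>\<sigma>\<in>UNIV. l \<sigma> * (Mx A (th \<sigma>) - th \<sigma> \<bullet> a))"
    and g0: "\<And>i. 0 \<le> g i" and r0: "\<And>i. 0 \<le> r i"
    and ron: "\<And>a \<sigma> i. a \<in> A \<Longrightarrow> \<sigma> i \<Longrightarrow> r i \<le> aff (th \<sigma> \<bullet> a - th (\<sigma>(i := False)) \<bullet> a)"
  shows "(\<And>\<sigma>. 0 \<le> l \<sigma>) \<Longrightarrow> (\<Sum>\<sigma>\<in>UNIV. l \<sigma> * exp_reward S A (th \<sigma>) [] k h)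
     \<le> (\<Sum>\<sigma>\<in>UNIV. l \<sigma> * (real k * Mx A (th \<sigma>))) - (\<Sum>i\<in>UNIV. cc g r k i * PS l i)"
proof (induction k arbitrary: h l)
  case 0
  then show ?case by simp
next
  case (Suc k)
  note l0 = Suc.prems
  define E where "E a \<sigma> z = exp_reward S A (th \<sigma>) [] k (h @ [(a, z)])" for a \<sigma> z
  define J where "J a \<sigma> = (\<integral>z. normal_density (th \<sigma> \<bullet> a) 1 z * E a \<sigma> z \<partial>lborel)" for a \<sigma>
  have ex: "exp_reward S A (th \<sigma>) [] (Suc k) h = (\<Sum>a\<in>A. pmf (S A h) a * (th \<sigma> \<bullet> a + J a \<sigma>))" for \<sigma>
  proof -
    have "exp_reward S A (th \<sigma>) [] (Suc k) h = (\<Sum>a\<in>A. pmf (S A h) a *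
        (th \<sigma> \<bullet> a + (\<integral>y. exp_reward S A (th \<sigma>) [] k (h @ [(a, th \<sigma> \<bullet> a + y)]) \<partial>noise)))"
      by (simp only: exp_reward.simps pmf_expect_sum[OF adm fin ne])
    also have "\<dots> = (\<Sum>a\<in>A. pmf (S A h) a * (th \<sigma> \<bullet> a + J a \<sigma>))"
    proof (rule sum.cong[OF refl])
      fix a
      have "(\<integral>y. exp_reward S A (th \<sigma>) [] k (h @ [(a, th \<sigma> \<bullet> a + y)]) \<partial>noise) = J a \<sigma>"
        unfolding J_def E_def
        by (rule noise_shift[where F = "\<lambda>z. exp_reward S A (th \<sigma>) [] k (h @ [(a, z)])"])
           (rule adm_meas0[OF adm fin ne])
      then show "pmf (S A h) a * (th \<sigma> \<bullet> a + (\<integral>y. exp_reward S A (th \<sigma>) [] k (h @ [(a, th \<sigma> \<bullet> a + y)]) \<partial>noise))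
          = pmf (S A h) a * (th \<sigma> \<bullet> a + J a \<sigma>)" by simp
    qed
    finally show ?thesis .
  qed
  define Bnd where "Bnd = (\<Sum>\<sigma>\<in>UNIV. l \<sigma> * (real (Suc k) * Mx A (th \<sigma>))) - (\<Sum>i\<in>UNIV. cc g r (Suc k) i * PS l i)"
  have each: "(\<Sum>\<sigma>\<in>UNIV. l \<sigma> * (th \<sigma> \<bullet> a + J a \<sigma>)) \<le> Bnd" if a: "a \<in> A" for a
  proof -
    have j: "(\<Sum>\<sigma>\<in>UNIV. l \<sigma> * J a \<sigma>)
        \<le> (\<Sum>\<sigma>\<in>UNIV. l \<sigma> * (real k * Mx A (th \<sigma>))) - (\<Sum>i\<in>UNIV. cc g r k i * r i * PS l i)"
      unfolding J_def
    proof (rule int_step[where C = "real k * (\<Sum>\<tau>\<in>UNIV. Bd A (th \<tau>))"])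
      show "E a \<sigma> \<in> borel_measurable borel" for \<sigma>
        unfolding E_def by (rule adm_meas[OF adm fin ne])
      show "\<bar>E a \<sigma> z\<bar> \<le> real k * (\<Sum>\<tau>\<in>UNIV. Bd A (th \<tau>))" for \<sigma> z
        unfolding E_def by (rule exp_bound_unif[OF adm fin ne])
      show "0 \<le> l \<sigma>" for \<sigma> by (rule l0)
      show "0 \<le> cc g r k i" for i by (rule cc_nonneg[OF g0 r0])
      show "r i \<le> aff (th \<sigma> \<bullet> a - th (\<sigma>(i := False)) \<bullet> a)" if "\<sigma> i" for \<sigma> i
        by (rule ron[of a \<sigma> i, OF a that])
      show "(\<Sum>\<sigma>\<in>UNIV. l' \<sigma> * E a \<sigma> z) \<le> (\<Sum>\<sigma>\<in>UNIV. l' \<sigma> * (real k * Mx A (th \<sigma>))) - (\<Sum>i\<in>UNIV. cc g r k i * PS l' i)"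
        if "\<And>\<sigma>. 0 \<le> l' \<sigma>" for z l'
        unfolding E_def by (rule Suc.IH[OF that])
    qed
    have t: "(\<Sum>\<sigma>\<in>UNIV. l \<sigma> * (th \<sigma> \<bullet> a)) \<le> (\<Sum>\<sigma>\<in>UNIV. l \<sigma> * Mx A (th \<sigma>)) - (\<Sum>i\<in>UNIV. g i * PS l i)"
    proof -
      have "(\<Sum>\<sigma>\<in>UNIV. l \<sigma> * (Mx A (th \<sigma>) - th \<sigma> \<bullet> a)) = (\<Sum>\<sigma>\<in>UNIV. l \<sigma> * Mx A (th \<sigma>)) - (\<Sum>\<sigma>\<in>UNIV. l \<sigma> * (th \<sigma> \<bullet> a))"
        by (simp add: right_diff_distrib sum_subtractf)
      then show ?thesis using R[of a l, OF a l0] by linarith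
    qed
    have "(\<Sum>\<sigma>\<in>UNIV. l \<sigma> * (th \<sigma> \<bullet> a + J a \<sigma>)) = (\<Sum>\<sigma>\<in>UNIV. l \<sigma> * (th \<sigma> \<bullet> a)) + (\<Sum>\<sigma>\<in>UNIV. l \<sigma> * J a \<sigma>)"
      by (simp add: distrib_left sum.distrib)
    also have "\<dots> \<le> ((\<Sum>\<sigma>\<in>UNIV. l \<sigma> * Mx A (th \<sigma>)) - (\<Sum>i\<in>UNIV. g i * PS l i))
        + ((\<Sum>\<sigma>\<in>UNIV. l \<sigma> * (real k * Mx A (th \<sigma>))) - (\<Sum>i\<in>UNIV. cc g r k i * r i * PS l i))"
      using t j by linarith
    also have "\<dots> = Bnd"
    proof -
      have "(\<Sum>\<sigma>\<in>UNIV. l \<sigma> * (real (Suc k) * Mx A (th \<sigma>))) = (\<Sum>\<sigma>\<in>UNIV. l \<sigma> * Mx A (th \<sigma>)) + (\<Sum>\<sigma>\<in>UNIV. l \<sigma> * (real k * Mx A (th \<sigma>)))"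
        by (simp add: sum.distrib[symmetric] algebra_simps)
      moreover have "(\<Sum>i\<in>UNIV. cc g r (Suc k) i * PS l i) = (\<Sum>i\<in>UNIV. g i * PS l i) + (\<Sum>i\<in>UNIV. cc g r k i * r i * PS l i)"
        by (simp add: sum.distrib[symmetric] algebra_simps)
      ultimately show ?thesis unfolding Bnd_def by linarith
    qed
    finally show ?thesis .
  qed
  have "(\<Sum>\<sigma>\<in>UNIV. l \<sigma> * exp_reward S A (th \<sigma>) [] (Suc k) h)
      = (\<Sum>a\<in>A. pmf (S A h) a * (\<Sum>\<sigma>\<in>UNIV. l \<sigma> * (th \<sigma> \<bullet> a + J a \<sigma>)))"
    unfolding ex by (simp add: sum_distrib_left sum.swap[of _ UNIV A] algebra_simps)
  also have "\<dots> \<le> (\<Sum>a\<in>A. pmf (S A h) a * Bnd)"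
    by (rule sum_mono) (simp add: mult_left_mono each)
  also have "\<dots> = Bnd"
    by (simp add: sum_distrib_right[symmetric] pmf_sum1[OF adm fin ne])
  finally show ?case unfolding Bnd_def .
qed

lemma offline:
  fixes th :: "('d::finite \<Rightarrow> bool) \<Rightarrow> 'd arm"
  assumes adm: "admissible S" and fin: "finite A" and ne: "A \<noteq> {}"
    and R: "\<And>a l. a \<in> A \<Longrightarrow> (\<And>\<sigma>. 0 \<le> l \<sigma>) \<Longrightarrow>
       (\<Sum>i\<in>UNIV. g i * PS l i) \<le> (\<Sum>\<sigma>\<in>UNIV. l \<sigma> * (Mx A (th \<sigma>) - th \<sigma> \<bullet> a))"
    and g0: "\<And>i. 0 \<le> g i" and r0: "\<And>i. 0 \<le> r i"
    and ron: "\<And>a \<sigma> i. a \<in> A \<Longrightarrow> \<sigma> i \<Longrightarrow> r i \<le> aff (th \<sigma> \<bullet> a - th (\<sigma>(i := False)) \<bullet> a)"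
    and q0: "\<And>i b. 0 \<le> q i b"
    and roff: "\<And>b \<sigma> i. b \<in> B \<Longrightarrow> \<sigma> i \<Longrightarrow> q i b \<le> aff (th \<sigma> \<bullet> b - th (\<sigma>(i := False)) \<bullet> b)"
  shows "set bs \<subseteq> B \<Longrightarrow> (\<And>\<sigma>. 0 \<le> l \<sigma>) \<Longrightarrow> (\<Sum>\<sigma>\<in>UNIV. l \<sigma> * exp_reward S A (th \<sigma>) bs k h)
     \<le> (\<Sum>\<sigma>\<in>UNIV. l \<sigma> * (real k * Mx A (th \<sigma>))) - (\<Sum>i\<in>UNIV. (prod_list (map (q i) bs) * cc g r k i) * PS l i)"
proof (induction bs arbitrary: h l)
  case Nil
  then show ?case using online[OF adm fin ne R g0 r0 ron, of l k h] by simp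
next
  case (Cons b bs)
  note l0 = Cons.prems(2)
  have bB: "b \<in> B" and bsB: "set bs \<subseteq> B" using Cons.prems(1) by auto
  define E where "E \<sigma> z = exp_reward S A (th \<sigma>) bs k (h @ [(b, z)])" for \<sigma> z
  have ex: "exp_reward S A (th \<sigma>) (b # bs) k h = (\<integral>z. normal_density (th \<sigma> \<bullet> b) 1 z * E \<sigma> z \<partial>lborel)" for \<sigma>
    unfolding exp_reward.simps E_def
    by (rule noise_shift[where F = "\<lambda>z. exp_reward S A (th \<sigma>) bs k (h @ [(b, z)])"])
       (rule adm_meas0[OF adm fin ne])
  have "(\<Sum>\<sigma>\<in>UNIV. l \<sigma> * exp_reward S A (th \<sigma>) (b # bs) k h)
      \<le> (\<Sum>\<sigma>\<in>UNIV. l \<sigma> * (real k * Mx A (th \<sigma>))) - (\<Sum>i\<in>UNIV. (prod_list (map (q i) bs) * cc g r k i) * q i b * PS l i)"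
    unfolding ex
  proof (rule int_step[where C = "real k * (\<Sum>\<tau>\<in>UNIV. Bd A (th \<tau>))"])
    show "E \<sigma> \<in> borel_measurable borel" for \<sigma>
      unfolding E_def by (rule adm_meas[OF adm fin ne])
    show "\<bar>E \<sigma> z\<bar> \<le> real k * (\<Sum>\<tau>\<in>UNIV. Bd A (th \<tau>))" for \<sigma> z
      unfolding E_def by (rule exp_bound_unif[OF adm fin ne])
    show "0 \<le> l \<sigma>" for \<sigma> by (rule l0)
    show "0 \<le> prod_list (map (q i) bs) * cc g r k i" for i
      by (intro mult_nonneg_nonneg prod_list_nonneg cc_nonneg g0 r0) (auto intro: q0)
    show "q i b \<le> aff (th \<sigma> \<bullet> b - th (\<sigma>(i := False)) \<bullet> b)" if "\<sigma> i" for \<sigma> i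
      by (rule roff[of b \<sigma> i, OF bB that])
    show "(\<Sum>\<sigma>\<in>UNIV. l' \<sigma> * E \<sigma> z) \<le> (\<Sum>\<sigma>\<in>UNIV. l' \<sigma> * (real k * Mx A (th \<sigma>))) - (\<Sum>i\<in>UNIV. (prod_list (map (q i) bs) * cc g r k i) * PS l' i)"
      if "\<And>\<sigma>. 0 \<le> l' \<sigma>" for z l'
      unfolding E_def by (rule Cons.IH[OF bsB that])
  qed
  also have "(\<Sum>i\<in>UNIV. (prod_list (map (q i) bs) * cc g r k i) * q i b * PS l i)
      = (\<Sum>i\<in>UNIV. (prod_list (map (q i) (b # bs)) * cc g r k i) * PS l i)"
    by (simp add: algebra_simps)
  finally show ?case .
qed


lemma mset_map_upt: "mset (map f [0..<n]) = (\<Sum>k\<in>{..<n}. {#f k#})"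
  by (induction n) (auto simp: lessThan_Suc add.commute)

lemma sorted_eig_diag:
  fixes c :: "'d::finite \<Rightarrow> real" and v :: "nat \<Rightarrow> real"
  assumes bij: "bij_betw idx (UNIV::'d set) {..<CARD('d)}"
    and cdef: "\<And>j. c j = v (idx j)"
    and mono: "\<And>i j. i \<le> j \<Longrightarrow> j < CARD('d) \<Longrightarrow> v i \<le> v j"
  shows "sorted_eigenvalues (\<chi> i j. if i = j then c i else 0) = map v [0..<CARD('d)]"
proof -
  have cp: "char_poly (\<chi> i j. if i = j then c i else 0 :: real ^'d^'d) = (\<Prod>i\<in>UNIV. [:- c i, 1:])"
    unfolding char_poly_def by (subst det_diagonal) auto
  have "proots (\<Prod>i\<in>(UNIV::'d set). [:- c i, 1:]) = (\<Sum>i\<in>UNIV. {#c i#})"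
    by (subst proots_prod) auto
  also have "\<dots> = (\<Sum>i\<in>UNIV. {#v (idx i)#})" by (simp add: cdef)
  also have "\<dots> = (\<Sum>k\<in>{..<CARD('d)}. {#v k#})"
    by (rule sum.reindex_bij_betw[OF bij, where g = "\<lambda>k. {#v k#}"])
  also have "\<dots> = mset (map v [0..<CARD('d)])" by (rule mset_map_upt[symmetric])
  finally have pr: "proots (char_poly (\<chi> i j. if i = j then c i else 0 :: real ^'d^'d)) = mset (map v [0..<CARD('d)])"
    using cp by simp
  have "sorted (map v [0..<CARD('d)])"
    unfolding sorted_iff_nth_mono by (auto intro: mono)
  then show ?thesis unfolding sorted_eigenvalues_def pr sorted_list_of_multiset_mset by (rule sorted_sort_id)
qed

lemma offline_arms_count:
  assumes fin: "finite A"
  shows "count (mset (offline_arms A \<pi> Toff)) a = (if a \<in> A then nat \<lfloor>\<pi> a * real Toff\<rfloor> else 0)"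
proof -
  define M where "M = (\<Sum>b\<in>A. replicate_mset (nat \<lfloor>\<pi> b * real Toff\<rfloor>) b)"
  obtain xs where xs: "mset xs = M" using ex_mset by blast
  have cM: "count M a = (if a \<in> A then nat \<lfloor>\<pi> a * real Toff\<rfloor> else 0)" for a
  proof -
    have "count M a = (\<Sum>b\<in>A. count (replicate_mset (nat \<lfloor>\<pi> b * real Toff\<rfloor>) b) a)"
      unfolding M_def by (rule count_sum)
    also have "\<dots> = (\<Sum>b\<in>A. if b = a then nat \<lfloor>\<pi> b * real Toff\<rfloor> else 0)"
      by (rule sum.cong) auto
    also have "\<dots> = (if a \<in> A then nat \<lfloor>\<pi> a * real Toff\<rfloor> else 0)"
      using fin by (simp add: sum.delta')
    finally show ?thesis .
  qed
  have "\<exists>xs. \<forall>a. count (mset xs) a = (if a \<in> A then nat \<lfloor>\<pi> a * real Toff\<rfloor> else 0)"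
    by (rule exI[of _ xs], rule allI, simp only: xs cM)
  then have "\<forall>a. count (mset (offline_arms A \<pi> Toff)) a = (if a \<in> A then nat \<lfloor>\<pi> a * real Toff\<rfloor> else 0)"
    unfolding offline_arms_def by (rule someI_ex)
  then show ?thesis by blast
qed

lemma offline_arms_subset:
  assumes fin: "finite A"
  shows "set (offline_arms A \<pi> Toff) \<subseteq> A"
proof
  fix x assume "x \<in> set (offline_arms A \<pi> Toff)"
  then have "count (mset (offline_arms A \<pi> Toff)) x > 0" by simp
  then show "x \<in> A" using offline_arms_count[OF fin] by (auto split: if_splits)
qed

lemma sum_list_count:
  fixes f :: "'a \<Rightarrow> real"
  assumes fin: "finite A" and sub: "set xs \<subseteq> A"
  shows "sum_list (map f xs) = (\<Sum>a\<in>A. real (count (mset xs) a) * f a)"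
  using sub
proof (induction xs)
  case Nil
  then show ?case by simp
next
  case (Cons x xs)
  then have xA: "x \<in> A" and sub': "set xs \<subseteq> A" by auto
  have "(\<Sum>a\<in>A. real (count (mset (x # xs)) a) * f a)
      = (\<Sum>a\<in>A. real (count (mset xs) a) * f a + (if a = x then f a else 0))"
    by (rule sum.cong) (auto simp: algebra_simps)
  also have "\<dots> = (\<Sum>a\<in>A. real (count (mset xs) a) * f a) + f x"
    using fin xA by (simp add: sum.distrib sum.delta')
  finally show ?case using Cons.IH[OF sub'] by simp
qed

lemma prod_list_pow:
  "prod_list (map (\<lambda>b. if P b then 1 else \<rho>) xs) = \<rho> ^ (length (filter (\<lambda>b. \<not> P b) xs))"
  by (induction xs) auto

lemma length_filter_sum_list:
  "real (length (filter Q xs)) = sum_list (map (\<lambda>b. if Q b then 1 else 0) xs)"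
  by (induction xs) auto

lemma offline_count_bound:
  assumes fin: "finite A" and pi0: "\<And>a. 0 \<le> \<pi> a"
  shows "real (length (filter Q (offline_arms A \<pi> Toff))) \<le> real Toff * (\<Sum>a\<in>A. \<pi> a * (if Q a then 1 else 0))"
proof -
  let ?xs = "offline_arms A \<pi> Toff"
  have "real (length (filter Q ?xs)) = (\<Sum>a\<in>A. real (count (mset ?xs) a) * (if Q a then 1 else 0))"
    unfolding length_filter_sum_list by (rule sum_list_count[OF fin offline_arms_subset[OF fin]])
  also have "\<dots> \<le> (\<Sum>a\<in>A. (\<pi> a * real Toff) * (if Q a then 1 else 0))"
  proof (rule sum_mono)
    fix a assume a: "a \<in> A"
    have "real (count (mset ?xs) a) = real (nat \<lfloor>\<pi> a * real Toff\<rfloor>)" using a offline_arms_count[OF fin] by simp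
    also have "\<dots> \<le> \<pi> a * real Toff" using pi0[of a] by (simp add: of_nat_nat)
    finally show "real (count (mset ?xs) a) * (if Q a then 1 else 0) \<le> (\<pi> a * real Toff) * (if Q a then 1 else 0)"
      by simp
  qed
  also have "\<dots> = real Toff * (\<Sum>a\<in>A. \<pi> a * (if Q a then 1 else 0))"
    by (simp add: sum_distrib_left algebra_simps)
  finally show ?thesis .
qed


lemma bij_flip: "bij_betw (\<lambda>\<sigma>. \<sigma>(i := False)) {\<sigma>::'d \<Rightarrow> bool. \<sigma> i} {\<sigma>. \<not> \<sigma> i}"
proof (rule bij_betwI[where g = "\<lambda>\<sigma>. \<sigma>(i := True)"])
  show "(\<lambda>\<sigma>. \<sigma>(i := False)) \<in> {\<sigma>. \<sigma> i} \<rightarrow> {\<sigma>. \<not> \<sigma> i}" by auto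
  show "(\<lambda>\<sigma>. \<sigma>(i := True)) \<in> {\<sigma>. \<not> \<sigma> i} \<rightarrow> {\<sigma>. \<sigma> i}" by auto
  show "x(i := False, i := True) = x" if "x \<in> {\<sigma>. \<sigma> i}" for x
    using that by (auto simp: fun_eq_iff)
  show "y(i := True, i := False) = y" if "y \<in> {\<sigma>. \<not> \<sigma> i}" for y
    using that by (auto simp: fun_eq_iff)
qed

lemma sum_pairs:
  fixes f :: "('d::finite \<Rightarrow> bool) \<Rightarrow> real"
  shows "(\<Sum>\<sigma>\<in>UNIV. f \<sigma>) = (\<Sum>\<sigma>\<in>{\<sigma>. \<sigma> i}. f \<sigma> + f (\<sigma>(i := False)))"
proof -
  have U: "(UNIV :: ('d \<Rightarrow> bool) set) = {\<sigma>. \<sigma> i} \<union> {\<sigma>. \<not> \<sigma> i}" by auto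
  have "(\<Sum>\<sigma>\<in>UNIV. f \<sigma>) = (\<Sum>\<sigma>\<in>{\<sigma>. \<sigma> i}. f \<sigma>) + (\<Sum>\<sigma>\<in>{\<sigma>. \<not> \<sigma> i}. f \<sigma>)"
    by (subst U, rule sum.union_disjoint) auto
  also have "(\<Sum>\<sigma>\<in>{\<sigma>. \<not> \<sigma> i}. f \<sigma>) = (\<Sum>\<sigma>\<in>{\<sigma>. \<sigma> i}. f (\<sigma>(i := False)))"
    by (rule sum.reindex_bij_betw[OF bij_flip, symmetric])
  finally show ?thesis by (simp add: sum.distrib)
qed

lemma card_pairs: "real (card (UNIV :: ('d::finite \<Rightarrow> bool) set)) = 2 * real (card {\<sigma>::'d \<Rightarrow> bool. \<sigma> i})"
  using sum_pairs[of "\<lambda>_. 1" i] by simp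

lemma PS_one: "PS (\<lambda>_. 1) i = real (card {\<sigma>::'d::finite \<Rightarrow> bool. \<sigma> i}) / 2"
  unfolding PS_def Hm_def by simp

lemma R_from_pairs:
  fixes th :: "('d::finite \<Rightarrow> bool) \<Rightarrow> 'd arm" and D :: "'d \<Rightarrow> ('d \<Rightarrow> bool) \<Rightarrow> real"
  assumes D: "\<And>\<sigma>. Mx A (th \<sigma>) - th \<sigma> \<bullet> a = (\<Sum>i\<in>UNIV. D i \<sigma>)"
    and pair: "\<And>i \<sigma> x y. \<sigma> i \<Longrightarrow> 0 \<le> x \<Longrightarrow> 0 \<le> y \<Longrightarrow> g i * min x y \<le> x * D i \<sigma> + y * D i (\<sigma>(i := False))"
    and g0: "\<And>i. 0 \<le> g i" and l0: "\<And>\<sigma>. 0 \<le> l \<sigma>"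
  shows "(\<Sum>i\<in>UNIV. g i * PS l i) \<le> (\<Sum>\<sigma>\<in>UNIV. l \<sigma> * (Mx A (th \<sigma>) - th \<sigma> \<bullet> a))"
proof -
  have "(\<Sum>\<sigma>\<in>UNIV. l \<sigma> * (Mx A (th \<sigma>) - th \<sigma> \<bullet> a)) = (\<Sum>i\<in>UNIV. \<Sum>\<sigma>\<in>UNIV. l \<sigma> * D i \<sigma>)"
  proof -
    have "(\<Sum>\<sigma>\<in>UNIV. l \<sigma> * (Mx A (th \<sigma>) - th \<sigma> \<bullet> a)) = (\<Sum>\<sigma>\<in>UNIV. \<Sum>i\<in>UNIV. l \<sigma> * D i \<sigma>)"
      by (simp only: D sum_distrib_left)
    also have "\<dots> = (\<Sum>i\<in>UNIV. \<Sum>\<sigma>\<in>UNIV. l \<sigma> * D i \<sigma>)"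
      by (rule sum.swap)
    finally show ?thesis .
  qed
  also have "\<dots> = (\<Sum>i\<in>UNIV. \<Sum>\<sigma>\<in>{\<sigma>. \<sigma> i}. l \<sigma> * D i \<sigma> + l (\<sigma>(i := False)) * D i (\<sigma>(i := False)))"
    by (rule sum.cong[OF refl], rule sum_pairs)
  also have "\<dots> \<ge> (\<Sum>i\<in>UNIV. \<Sum>\<sigma>\<in>{\<sigma>. \<sigma> i}. g i * Hm (l \<sigma>) (l (\<sigma>(i := False))))"
  proof (intro sum_mono)
    fix i :: 'd and \<sigma> :: "'d \<Rightarrow> bool" assume s: "\<sigma> \<in> {\<sigma>. \<sigma> i}"
    have "g i * Hm (l \<sigma>) (l (\<sigma>(i := False))) \<le> g i * min (l \<sigma>) (l (\<sigma>(i := False)))"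
      by (rule mult_left_mono[OF Hm_le_min[OF l0 l0] g0])
    also have "\<dots> \<le> l \<sigma> * D i \<sigma> + l (\<sigma>(i := False)) * D i (\<sigma>(i := False))"
      using pair[of \<sigma> i "l \<sigma>" "l (\<sigma>(i := False))"] s l0 by simp
    finally show "g i * Hm (l \<sigma>) (l (\<sigma>(i := False))) \<le> l \<sigma> * D i \<sigma> + l (\<sigma>(i := False)) * D i (\<sigma>(i := False))" .
  qed
  finally show ?thesis by (simp only: PS_def sum_distrib_left)
qed

lemma aff_nonneg: "0 \<le> aff d" by (simp add: aff_def)
lemma aff_le1: "aff d \<le> 1"
proof -
  have "1 \<le> exp (d\<^sup>2)" by simp
  then show ?thesis by (simp add: aff_def)
qed
lemma aff_zero: "aff 0 = 1" by (simp add: aff_def)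
lemma aff_sq: "d\<^sup>2 = d'\<^sup>2 \<Longrightarrow> aff d = aff d'" by (simp add: aff_def)

lemma aff_lower:
  assumes "d\<^sup>2 \<le> 1/2"
  shows "exp (- 2 * d\<^sup>2) \<le> aff d"
proof -
  let ?u = "d\<^sup>2"
  have u0: "0 \<le> ?u" by simp
  have "exp ?u \<le> 1 + 2 * ?u" using exp_bound_lemma[of ?u] assms by simp
  then have a: "1 - ?u \<le> (3 - exp ?u) / 2" by simp
  have "- ?u - 2 * ?u\<^sup>2 \<le> ln (1 - ?u)" by (rule ln_one_minus_pos_lower_bound[OF u0 assms])
  moreover have "- 2 * ?u \<le> - ?u - 2 * ?u\<^sup>2"
  proof -
    have "?u\<^sup>2 \<le> ?u * (1/2)" unfolding power2_eq_square[of ?u] by (rule mult_left_mono[OF assms u0])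
    then show ?thesis by simp
  qed
  ultimately have "- 2 * ?u \<le> ln (1 - ?u)" by linarith
  then have "exp (- 2 * ?u) \<le> exp (ln (1 - ?u))" by simp
  also have "\<dots> = 1 - ?u" using assms by simp
  finally have "exp (- 2 * ?u) \<le> (3 - exp ?u) / 2" using a by linarith
  then show ?thesis unfolding aff_def by (rule order.trans[OF _ max.cobounded2])
qed

lemma exists_ge_avg:
  fixes f :: "('d::finite \<Rightarrow> bool) \<Rightarrow> real"
  assumes "X \<le> (\<Sum>\<sigma>\<in>UNIV. f \<sigma>)"
  shows "\<exists>\<sigma>. X / real (card (UNIV :: ('d \<Rightarrow> bool) set)) \<le> f \<sigma>"
proof (rule ccontr)
  assume "\<not> ?thesis"
  then have lt: "f \<sigma> < X / real (card (UNIV :: ('d \<Rightarrow> bool) set))" for \<sigma> by (simp add: not_le)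
  have c: "real (card (UNIV :: ('d \<Rightarrow> bool) set)) > 0" by (simp add: card_gt_0_iff)
  have "(\<Sum>\<sigma>\<in>UNIV. f \<sigma>) < (\<Sum>\<sigma>\<in>(UNIV :: ('d \<Rightarrow> bool) set). X / real (card (UNIV :: ('d \<Rightarrow> bool) set)))"
    by (rule sum_strict_mono) (auto intro: lt)
  also have "\<dots> = X" using c by simp
  finally show False using assms by simp
qed

lemma cc_lower:
  assumes g0: "0 \<le> g i" and r0: "0 \<le> r i" and r1: "r i \<le> 1"
  shows "g i * real k * r i ^ k \<le> cc g r k i"
proof (induction k)
  case 0 then show ?case by simp
next
  case (Suc k)
  have "g i * real (Suc k) * r i ^ Suc k = g i * r i ^ Suc k + r i * (g i * real k * r i ^ k)"
    by (simp add: algebra_simps)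
  also have "\<dots> \<le> g i + r i * cc g r k i"
  proof (rule add_mono)
    have "r i ^ Suc k \<le> 1" using r0 r1 by (rule power_le_one)
    then show "g i * r i ^ Suc k \<le> g i" using g0 by (simp add: mult_left_le)
    show "r i * (g i * real k * r i ^ k) \<le> r i * cc g r k i" using Suc r0 by (rule mult_left_mono)
  qed
  finally show ?case by simp
qed

lemma cc_ge_g:
  assumes "\<And>i. 0 \<le> g i" "\<And>i. 0 \<le> r i" "1 \<le> k"
  shows "g i \<le> cc g r k i"
proof -
  obtain k' where k: "k = Suc k'" using assms(3) by (cases k) auto
  have "0 \<le> r i * cc g r k' i" using assms cc_nonneg[of g r k' i] by simp
  then show ?thesis by (simp add: k)
qed


lemma card_i_pos: "0 < card {\<sigma>::'d::finite \<Rightarrow> bool. \<sigma> i}"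
proof -
  have "(\<lambda>_. True) \<in> {\<sigma>::'d \<Rightarrow> bool. \<sigma> i}" by simp
  then show ?thesis by (simp add: card_gt_0_iff) blast
qed

lemma core_apply:
  fixes th :: "('d::finite \<Rightarrow> bool) \<Rightarrow> 'd arm"
  assumes adm: "admissible S" and fin: "finite A" and ne: "A \<noteq> {}"
    and R: "\<And>a l. a \<in> A \<Longrightarrow> (\<And>\<sigma>. 0 \<le> l \<sigma>) \<Longrightarrow>
       (\<Sum>i\<in>UNIV. g i * PS l i) \<le> (\<Sum>\<sigma>\<in>UNIV. l \<sigma> * (Mx A (th \<sigma>) - th \<sigma> \<bullet> a))"
    and g0: "\<And>i. 0 \<le> g i" and r0: "\<And>i. 0 \<le> r i"
    and ron: "\<And>a \<sigma> i. a \<in> A \<Longrightarrow> \<sigma> i \<Longrightarrow> r i \<le> aff (th \<sigma> \<bullet> a - th (\<sigma>(i := False)) \<bullet> a)"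
    and q0: "\<And>i b. 0 \<le> q i b"
    and roff: "\<And>b \<sigma> i. b \<in> A \<Longrightarrow> \<sigma> i \<Longrightarrow> q i b \<le> aff (th \<sigma> \<bullet> b - th (\<sigma>(i := False)) \<bullet> b)"
  shows "\<exists>\<sigma>. (\<Sum>i\<in>UNIV. prod_list (map (q i) (offline_arms A \<pi> Toff)) * cc g r T i) / 4
           \<le> regret A \<pi> (th \<sigma>) Toff T S"
proof -
  let ?bs = "offline_arms A \<pi> Toff"
  let ?C = "\<lambda>i. prod_list (map (q i) ?bs) * cc g r T i"
  have off: "(\<Sum>\<sigma>\<in>UNIV. (\<lambda>_. 1::real) \<sigma> * exp_reward S A (th \<sigma>) ?bs T [])
     \<le> (\<Sum>\<sigma>\<in>UNIV. (\<lambda>_. 1::real) \<sigma> * (real T * Mx A (th \<sigma>))) - (\<Sum>i\<in>UNIV. ?C i * PS (\<lambda>_. 1) i)"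
    using offline_arms_subset[OF fin, of \<pi> Toff]
    by (intro offline[OF adm fin ne R g0 r0 ron q0 roff]) auto
  have X: "(\<Sum>i\<in>UNIV. ?C i * PS (\<lambda>_. 1) i) \<le> (\<Sum>\<sigma>\<in>UNIV. regret A \<pi> (th \<sigma>) Toff T S)"
  proof -
    have "(\<Sum>\<sigma>\<in>UNIV. regret A \<pi> (th \<sigma>) Toff T S)
        = (\<Sum>\<sigma>\<in>UNIV. real T * Mx A (th \<sigma>)) - (\<Sum>\<sigma>\<in>UNIV. exp_reward S A (th \<sigma>) ?bs T [])"
      by (simp add: regret_def Mx_def sum_subtractf)
    then show ?thesis using off by simp
  qed
  obtain \<sigma> where s: "(\<Sum>i\<in>UNIV. ?C i * PS (\<lambda>_. 1) i) / real (card (UNIV :: ('d \<Rightarrow> bool) set)) \<le> regret A \<pi> (th \<sigma>) Toff T S"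
    using exists_ge_avg[OF X] by blast
  have "(\<Sum>i\<in>UNIV. ?C i * PS (\<lambda>_. 1) i) / real (card (UNIV :: ('d \<Rightarrow> bool) set))
      = (\<Sum>i\<in>UNIV. ?C i * PS (\<lambda>_. 1) i / real (card (UNIV :: ('d \<Rightarrow> bool) set)))"
    by (rule sum_divide_distrib)
  also have "\<dots> = (\<Sum>i\<in>UNIV. ?C i / 4)"
  proof (rule sum.cong[OF refl])
    fix i :: 'd
    have cp: "real (card {\<sigma>::'d \<Rightarrow> bool. \<sigma> i}) > 0" using card_i_pos[of i] by simp
    show "?C i * PS (\<lambda>_. 1) i / real (card (UNIV :: ('d \<Rightarrow> bool) set)) = ?C i / 4"
    proof -
      have gen: "\<And>C c::real. c > 0 \<Longrightarrow> C * (c / 2) / (2 * c) = C / 4" by (simp add: field_simps)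
      show ?thesis unfolding PS_one card_pairs[of i] by (rule gen[OF cp])
    qed
  qed
  also have "\<dots> = (\<Sum>i\<in>UNIV. ?C i) / 4" by (rule sum_divide_distrib[symmetric])
  finally have "(\<Sum>i\<in>UNIV. ?C i) / 4 \<le> regret A \<pi> (th \<sigma>) Toff T S" using s by linarith
  then show ?thesis by blast
qed


definition ax :: "'d::finite \<Rightarrow> 'd arm" where "ax j = axis j 1"
definition axA :: "'d::finite arm set" where "axA = insert 0 (range ax)"
definition axPi :: "('d::finite \<Rightarrow> nat) \<Rightarrow> (nat \<Rightarrow> real) \<Rightarrow> 'd arm \<Rightarrow> real" where
  "axPi idx v a = (if a \<in> axA then (if a = 0 then 1 - (\<Sum>k\<in>UNIV. v (idx k)) else (\<Sum>k\<in>UNIV. v (idx k) * a $ k)) else 0)"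

lemma ax_nth: "ax j $ k = (if k = j then 1 else 0)"
  by (simp add: ax_def axis_def)

lemma ax_ne0: "ax j \<noteq> 0"
  by (simp add: ax_def)

lemma zero_notin_ax: "0 \<notin> range ax"
  using ax_ne0 by fastforce

lemma inj_ax: "inj ax"
  by (auto simp: inj_on_def ax_def axis_eq_axis)

lemma axPi_ax: "axPi idx v (ax j) = v (idx j)"
proof -
  have "(\<Sum>k\<in>UNIV. v (idx k) * ax j $ k) = (\<Sum>k\<in>UNIV. if k = j then v (idx k) else 0)"
    by (rule sum.cong) (auto simp: ax_nth)
  also have "\<dots> = v (idx j)" by simp
  finally have "(\<Sum>k\<in>UNIV. v (idx k) * ax j $ k) = v (idx j)" .
  then show ?thesis by (simp add: axPi_def axA_def ax_ne0)
qed

lemma axPi_0: "axPi idx v 0 = 1 - (\<Sum>k\<in>UNIV. v (idx k))"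
  by (simp add: axPi_def axA_def)

lemma sum_axA:
  fixes f :: "'d::finite arm \<Rightarrow> real"
  shows "(\<Sum>a\<in>axA. f a) = f 0 + (\<Sum>j\<in>UNIV. f (ax j))"
proof -
  have "(\<Sum>a\<in>axA. f a) = f 0 + (\<Sum>a\<in>range ax. f a)"
    unfolding axA_def using zero_notin_ax by (subst sum.insert) auto
  also have "(\<Sum>a\<in>range ax. f a) = (\<Sum>j\<in>UNIV. f (ax j))"
    by (rule sum.reindex[OF inj_ax, unfolded comp_def])
  finally show ?thesis .
qed

lemma sum_reidx:
  assumes bij: "bij_betw idx (UNIV::'d::finite set) {..<CARD('d)}"
  shows "(\<Sum>k\<in>(UNIV::'d set). f (idx k)) = (\<Sum>i<CARD('d). f i)"
  by (rule sum.reindex_bij_betw[OF bij])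

lemma ax_in_class:
  fixes idx :: "'d::finite \<Rightarrow> nat" and v :: "nat \<Rightarrow> real"
  assumes bij: "bij_betw idx (UNIV::'d set) {..<CARD('d)}"
    and v0: "\<forall>i<CARD('d). 0 \<le> v i \<and> v i \<le> 1" and vs: "(\<Sum>i<CARD('d). v i) \<le> 1"
    and mono: "\<forall>i j. i \<le> j \<longrightarrow> j < CARD('d) \<longrightarrow> v i \<le> v j"
  shows "in_class Toff v (axA::'d arm set) (axPi idx v) \<theta>"
proof -
  have idx_lt: "idx k < CARD('d)" for k using bij by (auto simp: bij_betw_def)
  have vk0: "0 \<le> v (idx k)" for k using v0 idx_lt[of k] by auto
  have sv: "(\<Sum>k\<in>(UNIV::'d set). v (idx k)) = (\<Sum>i<CARD('d). v i)" by (rule sum_reidx[OF bij])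
  have fin: "finite (axA :: 'd arm set)" by (simp add: axA_def)
  have ne: "(axA :: 'd arm set) \<noteq> {}" by (simp add: axA_def)
  have card: "card (axA :: 'd arm set) \<le> (2 * CARD('d)) ^ CARD('d)"
  proof -
    have c1: "card (axA :: 'd arm set) \<le> Suc (card (range (ax :: 'd \<Rightarrow> 'd arm)))"
      unfolding axA_def by (simp add: card_insert_if)
    have c2: "card (range (ax :: 'd \<Rightarrow> 'd arm)) \<le> CARD('d)" by (rule card_image_le) simp
    have c3: "0 < CARD('d)" by simp
    have c4: "(2 * CARD('d)) ^ 1 \<le> (2 * CARD('d)) ^ CARD('d)"
      by (rule power_increasing) (use c3 in \<open>auto simp: Suc_le_eq\<close>)
    have c5: "2 * CARD('d) \<le> (2 * CARD('d)) ^ CARD('d)" using c4 by (simp only: power_one_right)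
    show ?thesis using c1 c2 c3 c5 by linarith
  qed
  have pos: "0 \<le> axPi idx v a" for a
  proof (cases "a \<in> axA")
    case True
    then consider "a = 0" | j where "a = ax j" by (auto simp: axA_def)
    then show ?thesis
    proof cases
      case 1 then show ?thesis using vs sv by (simp add: axPi_0)
    next
      case 2 then show ?thesis using vk0 by (simp add: axPi_ax)
    qed
  next
    case False then show ?thesis by (simp add: axPi_def)
  qed
  have out: "a \<notin> axA \<Longrightarrow> axPi idx v a = 0" for a by (simp add: axPi_def)
  have s1: "(\<Sum>a\<in>axA. axPi idx v a) = 1"
    unfolding sum_axA by (simp add: axPi_0 axPi_ax)
  have cov: "cov_matrix axA (axPi idx v) = (\<chi> i j. if i = j then v (idx i) else 0)"
    unfolding cov_matrix_def
  proof (rule vec_eq_iff[THEN iffD2], rule allI, rule vec_eq_iff[THEN iffD2], rule allI)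
    fix i j :: 'd
    have "(\<Sum>a\<in>axA. axPi idx v a * a $ i * a $ j) = (\<Sum>k\<in>UNIV. v (idx k) * ax k $ i * ax k $ j)"
      unfolding sum_axA by (simp add: axPi_ax)
    also have "\<dots> = (\<Sum>k\<in>UNIV. if k = i then (if i = j then v (idx i) else 0) else 0)"
      by (rule sum.cong) (auto simp: ax_nth)
    also have "\<dots> = (if i = j then v (idx i) else 0)" by simp
    finally show "(\<chi> i j. \<Sum>a\<in>axA. axPi idx v a * a $ i * a $ j) $ i $ j = (\<chi> i j. if i = j then v (idx i) else 0) $ i $ j"
      by simp
  qed
  have mx: "Max ((\<lambda>a. (norm a)\<^sup>2) ` (axA :: 'd arm set)) = 1"
  proof -
    obtain j :: 'd where True by blast
    have "(\<lambda>a. (norm a)\<^sup>2) ` (axA :: 'd arm set) = {0, 1}"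
      unfolding axA_def by (auto simp: ax_def image_iff)
    then show ?thesis by simp
  qed
  have eig: "sorted_eigenvalues (cov_matrix axA (axPi idx v)) = map v [0..<CARD('d)]"
    unfolding cov by (rule sorted_eig_diag[OF bij]) (use mono in auto)
  show ?thesis
    unfolding in_class_def using fin ne card pos out s1
    by (simp add: eig mx)
qed

definition axTh :: "'d::finite \<Rightarrow> real \<Rightarrow> ('d \<Rightarrow> bool) \<Rightarrow> 'd arm" where
  "axTh j0 \<epsilon> \<sigma> = (if \<sigma> j0 then \<epsilon> else - \<epsilon>) *\<^sub>R ax j0"

lemma axA_coord: "a \<in> axA \<Longrightarrow> a $ j = 0 \<or> a $ j = 1"
  by (auto simp: axA_def ax_nth)

lemma axTh_inner: "axTh j0 \<epsilon> \<sigma> \<bullet> a = (if \<sigma> j0 then \<epsilon> else - \<epsilon>) * a $ j0"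
  by (simp add: axTh_def ax_def inner_axis')

lemma axMx:
  fixes j0 :: "'d::finite"
  assumes e: "0 < \<epsilon>"
  shows "Mx axA (axTh j0 \<epsilon> \<sigma>) = (if \<sigma> j0 then \<epsilon> else 0)"
  unfolding Mx_def
proof (rule Max_eqI)
  show "finite ((\<lambda>a. axTh j0 \<epsilon> \<sigma> \<bullet> a) ` axA)" by (simp add: axA_def)
  show "y \<le> (if \<sigma> j0 then \<epsilon> else 0)" if "y \<in> (\<lambda>a. axTh j0 \<epsilon> \<sigma> \<bullet> a) ` axA" for y
    using that e by (auto simp: axTh_inner dest!: axA_coord[of _ j0])
  show "(if \<sigma> j0 then \<epsilon> else 0) \<in> (\<lambda>a. axTh j0 \<epsilon> \<sigma> \<bullet> a) ` axA"
  proof (cases "\<sigma> j0")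
    case True
    have "ax j0 \<in> axA" by (simp add: axA_def)
    moreover have "axTh j0 \<epsilon> \<sigma> \<bullet> ax j0 = \<epsilon>" using True by (simp add: axTh_inner ax_nth)
    ultimately show ?thesis using True by force
  next
    case False
    have "(0::'d arm) \<in> axA" by (simp add: axA_def)
    moreover have "axTh j0 \<epsilon> \<sigma> \<bullet> 0 = 0" by simp
    ultimately show ?thesis using False by force
  qed
qed

lemma ax_regret:
  fixes j0 :: "'d::finite" and idx :: "'d \<Rightarrow> nat"
  assumes adm: "admissible S" and e: "0 < \<epsilon>"
  shows "\<exists>\<sigma>. cc (\<lambda>i. if i = j0 then \<epsilon> else 0) (\<lambda>_. aff (2 * \<epsilon>)) T j0
            * aff (2 * \<epsilon>) ^ length (filter (\<lambda>b. \<not> b $ j0 = 0) (offline_arms axA \<pi> Toff)) / 4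
           \<le> regret axA \<pi> (axTh j0 \<epsilon> \<sigma>) Toff T S"
proof -
  let ?g = "\<lambda>i. if i = j0 then \<epsilon> else 0"
  let ?r = "\<lambda>_::'d. aff (2 * \<epsilon>)"
  let ?q = "\<lambda>(i::'d) (b::'d arm). if b $ i = 0 then 1 else aff (2 * \<epsilon>)"
  let ?th = "axTh j0 \<epsilon>"
  have fin: "finite (axA :: 'd arm set)" by (simp add: axA_def)
  have ne: "(axA :: 'd arm set) \<noteq> {}" by (simp add: axA_def)
  have g0: "0 \<le> ?g i" for i using e by simp
  have r0: "0 \<le> ?r i" for i by (rule aff_nonneg)
  have q0: "0 \<le> ?q i b" for i b by (simp add: aff_nonneg)
  have diff: "?th \<sigma> \<bullet> a - ?th (\<sigma>(i := False)) \<bullet> a = (if i = j0 \<and> \<sigma> j0 then 2 * \<epsilon> * a $ j0 else 0)" for \<sigma> i a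
    by (auto simp: axTh_inner)
  have affc: "?q i a \<le> aff (?th \<sigma> \<bullet> a - ?th (\<sigma>(i := False)) \<bullet> a)" if a: "a \<in> axA" and s: "\<sigma> i" for a \<sigma> i
  proof (cases "i = j0")
    case True
    show ?thesis using axA_coord[OF a, of j0] True s by (auto simp: diff aff_zero)
  next
    case False
    then show ?thesis using aff_le1[of "2 * \<epsilon>"] by (simp add: diff aff_zero)
  qed
  have ron: "?r i \<le> aff (?th \<sigma> \<bullet> a - ?th (\<sigma>(i := False)) \<bullet> a)" if a: "a \<in> axA" and s: "\<sigma> i" for a \<sigma> i
  proof -
    have "?r i \<le> ?q i a" using aff_le1[of "2 * \<epsilon>"] by simp
    then show ?thesis using affc[of a \<sigma> i, OF a s] by linarith
  qed
  have R: "(\<Sum>i\<in>UNIV. ?g i * PS l i) \<le> (\<Sum>\<sigma>\<in>UNIV. l \<sigma> * (Mx axA (?th \<sigma>) - ?th \<sigma> \<bullet> a))"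
    if a: "a \<in> axA" and l0: "\<And>\<sigma>. 0 \<le> l \<sigma>" for a l
  proof (rule R_from_pairs[where D = "\<lambda>i \<sigma>. if i = j0 then Mx axA (?th \<sigma>) - ?th \<sigma> \<bullet> a else 0"])
    show "Mx axA (?th \<sigma>) - ?th \<sigma> \<bullet> a = (\<Sum>i\<in>UNIV. if i = j0 then Mx axA (?th \<sigma>) - ?th \<sigma> \<bullet> a else 0)" for \<sigma>
      by simp
    show "?g i * min x y \<le> x * (if i = j0 then Mx axA (?th \<sigma>) - ?th \<sigma> \<bullet> a else 0)
          + y * (if i = j0 then Mx axA (?th (\<sigma>(i := False))) - ?th (\<sigma>(i := False)) \<bullet> a else 0)"
      if s: "\<sigma> i" and x: "0 \<le> x" and y: "0 \<le> y" for i \<sigma> x y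
    proof (cases "i = j0")
      case True
      then have sj: "\<sigma> j0" using s by simp
      have m1: "Mx axA (?th \<sigma>) = \<epsilon>" using axMx[OF e, of j0 \<sigma>] sj by simp
      have m2: "Mx axA (?th (\<sigma>(i := False))) = 0" using axMx[OF e, of j0 "\<sigma>(i := False)"] True by simp
      consider "a $ j0 = 0" | "a $ j0 = 1" using axA_coord[OF a] by blast
      then show ?thesis
      proof cases
        case 1
        then show ?thesis using True sj m1 m2 x y e by (simp add: axTh_inner mult_left_mono)
      next
        case 2
        then show ?thesis using True sj m1 m2 x y e by (simp add: axTh_inner mult_left_mono)
      qed
    next
      case False
      then show ?thesis by simp
    qed
    show "0 \<le> ?g i" for i by (rule g0)
    show "0 \<le> l \<sigma>" for \<sigma> by (rule l0)
  qed
  obtain \<sigma> where s: "(\<Sum>i\<in>UNIV. prod_list (map (?q i) (offline_arms axA \<pi> Toff)) * cc ?g ?r T i) / 4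
           \<le> regret axA \<pi> (?th \<sigma>) Toff T S"
    using core_apply[OF adm fin ne R g0 r0 ron q0 affc] by blast
  have "prod_list (map (?q j0) (offline_arms axA \<pi> Toff)) * cc ?g ?r T j0
      \<le> (\<Sum>i\<in>UNIV. prod_list (map (?q i) (offline_arms axA \<pi> Toff)) * cc ?g ?r T i)"
    by (rule member_le_sum) (auto intro!: mult_nonneg_nonneg prod_list_nonneg cc_nonneg g0 r0 q0)
  moreover have "prod_list (map (?q j0) (offline_arms axA \<pi> Toff))
      = aff (2 * \<epsilon>) ^ length (filter (\<lambda>b. \<not> b $ j0 = 0) (offline_arms axA \<pi> Toff))"
    by (rule prod_list_pow)
  ultimately show ?thesis using s by (intro exI[of _ \<sigma>]) (simp add: mult.commute)
qed


definition boxS :: "('d::finite \<Rightarrow> real set) \<Rightarrow> 'd arm set" where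
  "boxS V = {a. \<forall>k. a $ k \<in> V k}"

lemma bij_vec_box: "bij_betw vec_lambda (Pi\<^sub>E UNIV V) (boxS V)"
proof (rule bij_betwI[where g = vec_nth])
  show "vec_lambda \<in> Pi\<^sub>E UNIV V \<rightarrow> boxS V" by (auto simp: boxS_def)
  show "vec_nth \<in> boxS V \<rightarrow> Pi\<^sub>E UNIV V" by (auto simp: boxS_def PiE_UNIV_domain)
  show "vec_nth (vec_lambda x) = x" for x by (simp add: fun_eq_iff)
  show "vec_lambda (vec_nth y) = y" for y by simp
qed

lemma finite_box: "(\<And>k. finite (V k)) \<Longrightarrow> finite (boxS V)"
  using bij_betw_finite[OF bij_vec_box[of V]] by (simp add: finite_PiE)

lemma card_box: "(\<And>k. finite (V k)) \<Longrightarrow> card (boxS V) = (\<Prod>k\<in>UNIV. card (V k))"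
  using bij_betw_same_card[OF bij_vec_box[of V]] by (simp add: card_PiE)

lemma sum_prod_box:
  fixes F :: "'d::finite \<Rightarrow> real \<Rightarrow> real"
  assumes fin: "\<And>k. finite (V k)"
  shows "(\<Sum>a\<in>boxS V. \<Prod>k\<in>UNIV. F k (a $ k)) = (\<Prod>k\<in>UNIV. \<Sum>x\<in>V k. F k x)"
proof -
  have "(\<Sum>a\<in>boxS V. \<Prod>k\<in>UNIV. F k (a $ k)) = (\<Sum>f\<in>Pi\<^sub>E UNIV V. \<Prod>k\<in>UNIV. F k (vec_lambda f $ k))"
    by (rule sum.reindex_bij_betw[OF bij_vec_box, symmetric])
  also have "\<dots> = (\<Sum>f\<in>Pi\<^sub>E UNIV V. \<Prod>k\<in>UNIV. F k (f k))" by simp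
  also have "\<dots> = (\<Prod>k\<in>UNIV. \<Sum>x\<in>V k. F k x)"
    by (rule prod_sum_PiE[symmetric]) (auto simp: fin)
  finally show ?thesis .
qed

definition V3 :: "('d::finite \<Rightarrow> real) \<Rightarrow> 'd \<Rightarrow> real set" where "V3 s k = {- s k, 0, s k}"
definition pc :: "real \<Rightarrow> real \<Rightarrow> real" where "pc p x = (if x = 0 then 1 - p else p / 2)"
definition prA :: "('d::finite \<Rightarrow> real) \<Rightarrow> 'd arm set" where "prA s = boxS (V3 s)"
definition prPi :: "('d::finite \<Rightarrow> real) \<Rightarrow> ('d \<Rightarrow> real) \<Rightarrow> 'd arm \<Rightarrow> real" where
  "prPi s p a = (if a \<in> prA s then (\<Prod>k\<in>UNIV. pc (p k) (a $ k)) else 0)"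

lemma fin_V3: "finite (V3 s k)" by (simp add: V3_def)

lemma sum_V3:
  assumes "0 < s k"
  shows "(\<Sum>x\<in>V3 s k. pc p x * G x) = (1 - p) * G 0 + p / 2 * (G (s k) + G (- s k))"
proof -
  have d: "- s k \<noteq> 0" "s k \<noteq> 0" "- s k \<noteq> s k" using assms by auto
  show ?thesis unfolding V3_def using d by (simp add: pc_def algebra_simps)
qed

lemma finite_prA: "finite (prA s)" unfolding prA_def by (rule finite_box, rule fin_V3)

lemma sum_box_gen:
  fixes s p :: "'d::finite \<Rightarrow> real"
  shows "(\<Sum>a\<in>prA s. prPi s p a * (\<Prod>k\<in>UNIV. E k (a $ k))) = (\<Prod>k\<in>UNIV. \<Sum>x\<in>V3 s k. pc (p k) x * E k x)"
proof -
  have "(\<Sum>a\<in>prA s. prPi s p a * (\<Prod>k\<in>UNIV. E k (a $ k))) = (\<Sum>a\<in>prA s. \<Prod>k\<in>UNIV. pc (p k) (a $ k) * E k (a $ k))"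
    by (rule sum.cong) (auto simp: prPi_def prod.distrib)
  also have "\<dots> = (\<Prod>k\<in>UNIV. \<Sum>x\<in>V3 s k. pc (p k) x * E k x)"
    unfolding prA_def by (rule sum_prod_box) (rule fin_V3)
  finally show ?thesis .
qed

lemma prod_delta1: "(\<Prod>k\<in>(UNIV::'d::finite set). if k = i then f k else 1) = f i"
  by simp

lemma sum_box_one:
  fixes s p :: "'d::finite \<Rightarrow> real"
  assumes s0: "\<And>k. 0 < s k"
  shows "(\<Sum>a\<in>prA s. prPi s p a * G (a $ i)) = (1 - p i) * G 0 + p i / 2 * (G (s i) + G (- s i))"
proof -
  have "(\<Sum>a\<in>prA s. prPi s p a * G (a $ i)) = (\<Sum>a\<in>prA s. prPi s p a * (\<Prod>k\<in>UNIV. if k = i then G (a $ k) else 1))"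
    by (simp only: prod_delta1)
  also have "\<dots> = (\<Prod>k\<in>UNIV. \<Sum>x\<in>V3 s k. pc (p k) x * (if k = i then G x else 1))"
    by (rule sum_box_gen)
  also have "\<dots> = (\<Prod>k\<in>UNIV. if k = i then (\<Sum>x\<in>V3 s k. pc (p k) x * G x) else 1)"
    by (rule prod.cong) (auto simp: sum_V3[OF s0])
  also have "\<dots> = (\<Sum>x\<in>V3 s i. pc (p i) x * G x)" by (rule prod_delta1)
  finally show ?thesis by (simp add: sum_V3[OF s0])
qed

lemma sum_box_total:
  fixes s p :: "'d::finite \<Rightarrow> real"
  assumes s0: "\<And>k. 0 < s k"
  shows "(\<Sum>a\<in>prA s. prPi s p a) = 1"
proof -
  obtain i :: 'd where True by blast
  show ?thesis using sum_box_one[OF s0, where p=p and G="\<lambda>_. 1" and i=i] by simp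
qed

lemma sum_box_two:
  fixes s p :: "'d::finite \<Rightarrow> real"
  assumes s0: "\<And>k. 0 < s k" and ij: "i \<noteq> j"
  shows "(\<Sum>a\<in>prA s. prPi s p a * a $ i * a $ j) = 0"
proof -
  have "(\<Sum>a\<in>prA s. prPi s p a * a $ i * a $ j)
      = (\<Sum>a\<in>prA s. prPi s p a * (\<Prod>k\<in>UNIV. (if k = i then a $ k else 1) * (if k = j then a $ k else 1)))"
    by (simp only: prod.distrib prod_delta1 mult.assoc)
  also have "\<dots> = (\<Prod>k\<in>UNIV. \<Sum>x\<in>V3 s k. pc (p k) x * ((if k = i then x else 1) * (if k = j then x else 1)))"
    by (rule sum_box_gen)
  also have "\<dots> = 0"
  proof (rule prod_zero)
    show "finite (UNIV :: 'd set)" by simp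
    have "(\<Sum>x\<in>V3 s i. pc (p i) x * ((if i = i then x else 1) * (if i = j then x else 1))) = 0"
      using ij by (simp add: sum_V3[OF s0])
    then show "\<exists>k\<in>UNIV. (\<Sum>x\<in>V3 s k. pc (p k) x * ((if k = i then x else 1) * (if k = j then x else 1))) = 0"
      by blast
  qed
  finally show ?thesis .
qed

lemma cov_prA:
  fixes s p :: "'d::finite \<Rightarrow> real"
  assumes s0: "\<And>k. 0 < s k"
  shows "cov_matrix (prA s) (prPi s p) = (\<chi> i j. if i = j then p i * (s i)\<^sup>2 else 0)"
  unfolding cov_matrix_def
proof (rule vec_eq_iff[THEN iffD2], rule allI, rule vec_eq_iff[THEN iffD2], rule allI)
  fix i j :: 'd
  have "(\<Sum>a\<in>prA s. prPi s p a * a $ i * a $ j) = (if i = j then p i * (s i)\<^sup>2 else 0)"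
  proof (cases "i = j")
    case True
    have "(\<Sum>a\<in>prA s. prPi s p a * a $ i * a $ j) = (\<Sum>a\<in>prA s. prPi s p a * (a $ i * a $ i))"
      using True by (simp add: mult.assoc)
    also have "\<dots> = p i * (s i)\<^sup>2" using sum_box_one[OF s0, where p=p and G="\<lambda>x. x * x" and i=i] by (simp add: power2_eq_square)
    finally show ?thesis using True by simp
  next
    case False
    then show ?thesis using sum_box_two[OF s0 False] by simp
  qed
  then show "(\<chi> i j. \<Sum>a\<in>prA s. prPi s p a * a $ i * a $ j) $ i $ j = (\<chi> i j. if i = j then p i * (s i)\<^sup>2 else 0) $ i $ j"
    by simp
qed

lemma prA_coord: "a \<in> prA s \<Longrightarrow> a $ k = - s k \<or> a $ k = 0 \<or> a $ k = s k"
  by (auto simp: prA_def boxS_def V3_def)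

lemma norm_sq_vec: "(norm (a :: 'd::finite arm))\<^sup>2 = (\<Sum>k\<in>UNIV. (a $ k)\<^sup>2)"
proof -
  have "(norm a)\<^sup>2 = a \<bullet> a" by (rule power2_norm_eq_inner)
  also have "\<dots> = (\<Sum>k\<in>UNIV. a $ k * a $ k)" by (simp add: inner_vec_def)
  finally show ?thesis by (simp add: power2_eq_square)
qed

lemma prMax:
  fixes s :: "'d::finite \<Rightarrow> real"
  assumes s0: "\<And>k. 0 < s k"
  shows "Max ((\<lambda>a. (norm a)\<^sup>2) ` prA s) = (\<Sum>k\<in>UNIV. (s k)\<^sup>2)"
proof (rule Max_eqI)
  show "finite ((\<lambda>a. (norm a)\<^sup>2) ` prA s)" by (simp add: finite_prA)
  show "y \<le> (\<Sum>k\<in>UNIV. (s k)\<^sup>2)" if yin: "y \<in> (\<lambda>a. (norm a)\<^sup>2) ` prA s" for y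
  proof -
    obtain a where a: "a \<in> prA s" and y: "y = (norm a)\<^sup>2" using yin by blast
    have "(a $ k)\<^sup>2 \<le> (s k)\<^sup>2" for k using prA_coord[OF a, of k] by auto
    then show ?thesis unfolding y norm_sq_vec by (intro sum_mono) auto
  qed
  have sv: "(\<chi> k. s k) \<in> prA s" by (simp add: prA_def boxS_def V3_def)
  show "(\<Sum>k\<in>UNIV. (s k)\<^sup>2) \<in> (\<lambda>a. (norm a)\<^sup>2) ` prA s"
    using sv by (intro image_eqI[of _ _ "\<chi> k. s k"]) (auto simp: norm_sq_vec)
qed

lemma card_prA:
  fixes s :: "'d::finite \<Rightarrow> real"
  assumes s0: "\<And>k. 0 < s k"
  shows "card (prA s) = 3 ^ CARD('d)"
proof -
  have "card (V3 s k) = 3" for k using s0[of k] by (simp add: V3_def)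
  then show ?thesis unfolding prA_def by (simp add: card_box[OF fin_V3])
qed

lemma pr_in_class:
  fixes idx :: "'d::finite \<Rightarrow> nat" and v w :: "nat \<Rightarrow> real"
  assumes bij: "bij_betw idx (UNIV::'d set) {..<CARD('d)}"
    and v0: "\<forall>i<CARD('d). 0 \<le> v i \<and> v i \<le> 1"
    and mono: "\<forall>i j. i \<le> j \<longrightarrow> j < CARD('d) \<longrightarrow> v i \<le> v j"
    and w0: "\<forall>i<CARD('d). 0 < w i \<and> v i \<le> w i" and ws: "(\<Sum>i<CARD('d). w i) = 1"
    and d2: "2 \<le> CARD('d)"
  shows "in_class Toff v (prA (\<lambda>k. sqrt (w (idx k)))) (prPi (\<lambda>k. sqrt (w (idx k))) (\<lambda>k. v (idx k) / w (idx k))) \<theta>"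
proof -
  define s where "s = (\<lambda>k. sqrt (w (idx k)))"
  define p where "p = (\<lambda>k. v (idx k) / w (idx k))"
  have idx_lt: "idx k < CARD('d)" for k using bij by (auto simp: bij_betw_def)
  have wpos: "0 < w (idx k)" for k using w0 idx_lt[of k] by auto
  have s0: "0 < s k" for k using wpos[of k] by (simp add: s_def)
  have p0: "0 \<le> p k" for k using v0 idx_lt[of k] wpos[of k] by (simp add: p_def)
  have p1: "p k \<le> 1" for k using w0 idx_lt[of k] wpos[of k] by (simp add: p_def)
  have ps: "p k * (s k)\<^sup>2 = v (idx k)" for k using wpos[of k] by (simp add: p_def s_def)
  have fin: "finite (prA s)" by (rule finite_prA)
  have ne: "prA s \<noteq> {}"
  proof -
    have "(\<chi> k. s k) \<in> prA s" by (simp add: prA_def boxS_def V3_def)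
    then show ?thesis by blast
  qed
  have card: "card (prA s) \<le> (2 * CARD('d)) ^ CARD('d)"
    unfolding card_prA[OF s0] by (rule power_mono) (use d2 in auto)
  have pos: "0 \<le> prPi s p a" for a
    unfolding prPi_def pc_def using p0 p1 by (auto intro!: prod_nonneg)
  have out: "a \<notin> prA s \<Longrightarrow> prPi s p a = 0" for a by (simp add: prPi_def)
  have s1: "(\<Sum>a\<in>prA s. prPi s p a) = 1" by (rule sum_box_total[OF s0])
  have cov: "cov_matrix (prA s) (prPi s p) = (\<chi> i j. if i = j then v (idx i) else 0)"
    unfolding cov_prA[OF s0] ps ..
  have mx: "Max ((\<lambda>a. (norm a)\<^sup>2) ` prA s) = 1"
  proof -
    have "(\<Sum>k\<in>UNIV. (s k)\<^sup>2) = (\<Sum>k\<in>(UNIV::'d set). w (idx k))"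
      using wpos by (simp add: s_def less_imp_le)
    also have "\<dots> = (\<Sum>i<CARD('d). w i)" by (rule sum_reidx[OF bij])
    finally show ?thesis unfolding prMax[OF s0] ws by simp
  qed
  have eig: "sorted_eigenvalues (cov_matrix (prA s) (prPi s p)) = map v [0..<CARD('d)]"
    unfolding cov by (rule sorted_eig_diag[OF bij]) (use mono in auto)
  show ?thesis
    unfolding in_class_def s_def[symmetric] p_def[symmetric] using fin ne card pos out s1
    by (simp add: eig mx)
qed

definition prTh :: "('d::finite \<Rightarrow> real) \<Rightarrow> ('d \<Rightarrow> bool) \<Rightarrow> 'd arm" where
  "prTh \<epsilon> \<sigma> = (\<chi> k. if \<sigma> k then \<epsilon> k else - \<epsilon> k)"

lemma prTh_inner: "prTh \<epsilon> \<sigma> \<bullet> a = (\<Sum>k\<in>UNIV. (if \<sigma> k then \<epsilon> k else - \<epsilon> k) * a $ k)"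
  by (simp add: prTh_def inner_vec_def)

lemma prMx:
  fixes s \<epsilon> :: "'d::finite \<Rightarrow> real"
  assumes s0: "\<And>k. 0 < s k" and e0: "\<And>k. 0 \<le> \<epsilon> k"
  shows "Mx (prA s) (prTh \<epsilon> \<sigma>) = (\<Sum>k\<in>UNIV. \<epsilon> k * s k)"
  unfolding Mx_def
proof (rule Max_eqI)
  show "finite ((\<lambda>a. prTh \<epsilon> \<sigma> \<bullet> a) ` prA s)" by (simp add: finite_prA)
  show "y \<le> (\<Sum>k\<in>UNIV. \<epsilon> k * s k)" if yin: "y \<in> (\<lambda>a. prTh \<epsilon> \<sigma> \<bullet> a) ` prA s" for y
  proof -
    obtain a where a: "a \<in> prA s" and y: "y = prTh \<epsilon> \<sigma> \<bullet> a" using yin by blast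
    have "(if \<sigma> k then \<epsilon> k else - \<epsilon> k) * a $ k \<le> \<epsilon> k * s k" for k
      using prA_coord[OF a, of k] e0[of k] s0[of k] by auto
    then show ?thesis unfolding y prTh_inner by (intro sum_mono) auto
  qed
  have sv: "(\<chi> k. if \<sigma> k then s k else - s k) \<in> prA s" by (simp add: prA_def boxS_def V3_def)
  have "prTh \<epsilon> \<sigma> \<bullet> (\<chi> k. if \<sigma> k then s k else - s k) = (\<Sum>k\<in>UNIV. \<epsilon> k * s k)"
    unfolding prTh_inner by (rule sum.cong) auto
  then show "(\<Sum>k\<in>UNIV. \<epsilon> k * s k) \<in> (\<lambda>a. prTh \<epsilon> \<sigma> \<bullet> a) ` prA s"
    using sv by (intro image_eqI[of _ _ "\<chi> k. if \<sigma> k then s k else - s k"]) auto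
qed

lemma prTh_diff:
  "prTh \<epsilon> \<sigma> \<bullet> a - prTh \<epsilon> (\<sigma>(i := False)) \<bullet> a = (if \<sigma> i then 2 * \<epsilon> i * a $ i else 0)"
proof -
  have "prTh \<epsilon> \<sigma> \<bullet> a - prTh \<epsilon> (\<sigma>(i := False)) \<bullet> a
     = (\<Sum>k\<in>UNIV. (if \<sigma> k then \<epsilon> k else - \<epsilon> k) * a $ k - (if (\<sigma>(i := False)) k then \<epsilon> k else - \<epsilon> k) * a $ k)"
    unfolding prTh_inner by (rule sum_subtractf[symmetric])
  also have "\<dots> = (\<Sum>k\<in>UNIV. if k = i then (if \<sigma> i then 2 * \<epsilon> i * a $ i else 0) else 0)"
    by (rule sum.cong) auto
  also have "\<dots> = (if \<sigma> i then 2 * \<epsilon> i * a $ i else 0)" by simp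
  finally show ?thesis .
qed

lemma pr_regret:
  fixes s \<epsilon> :: "'d::finite \<Rightarrow> real"
  assumes adm: "admissible S" and s0: "\<And>k. 0 < s k" and e0: "\<And>k. 0 < \<epsilon> k"
  shows "\<exists>\<sigma>. (\<Sum>i\<in>UNIV. aff (2 * \<epsilon> i * s i) ^ length (filter (\<lambda>b. \<not> b $ i = 0) (offline_arms (prA s) \<pi> Toff))
              * cc (\<lambda>i. 2 * \<epsilon> i * s i) (\<lambda>i. aff (2 * \<epsilon> i * s i)) T i) / 4
           \<le> regret (prA s) \<pi> (prTh \<epsilon> \<sigma>) Toff T S"
proof -
  let ?g = "\<lambda>i. 2 * \<epsilon> i * s i"
  let ?r = "\<lambda>i. aff (2 * \<epsilon> i * s i)"
  let ?q = "\<lambda>i (b::'d arm). if b $ i = 0 then 1 else aff (2 * \<epsilon> i * s i)"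
  let ?th = "prTh \<epsilon>"
  have fin: "finite (prA s)" by (rule finite_prA)
  have ne: "prA s \<noteq> {}"
  proof -
    have "(\<chi> k. s k) \<in> prA s" by (simp add: prA_def boxS_def V3_def)
    then show ?thesis by blast
  qed
  have g0: "0 \<le> ?g i" for i using e0[of i] s0[of i] by simp
  have r0: "0 \<le> ?r i" for i by (rule aff_nonneg)
  have q0: "0 \<le> ?q i b" for i b by (simp add: aff_nonneg)
  have affc: "?q i a \<le> aff (?th \<sigma> \<bullet> a - ?th (\<sigma>(i := False)) \<bullet> a)" if a: "a \<in> prA s" and si: "\<sigma> i" for a \<sigma> i
  proof -
    have "aff (2 * \<epsilon> i * (- s i)) = aff (2 * \<epsilon> i * s i)" by (rule aff_sq) (simp add: power2_eq_square)
    then show ?thesis using prA_coord[OF a, of i] si s0[of i] by (auto simp: prTh_diff aff_zero)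
  qed
  have ron: "?r i \<le> aff (?th \<sigma> \<bullet> a - ?th (\<sigma>(i := False)) \<bullet> a)" if a: "a \<in> prA s" and si: "\<sigma> i" for a \<sigma> i
  proof -
    have "?r i \<le> ?q i a" using aff_le1[of "2 * \<epsilon> i * s i"] by simp
    then show ?thesis using affc[of a \<sigma> i, OF a si] by linarith
  qed
  have R: "(\<Sum>i\<in>UNIV. ?g i * PS l i) \<le> (\<Sum>\<sigma>\<in>UNIV. l \<sigma> * (Mx (prA s) (?th \<sigma>) - ?th \<sigma> \<bullet> a))"
    if a: "a \<in> prA s" and l0: "\<And>\<sigma>. 0 \<le> l \<sigma>" for a l
  proof (rule R_from_pairs[where D = "\<lambda>i \<sigma>. \<epsilon> i * s i - (if \<sigma> i then \<epsilon> i else - \<epsilon> i) * a $ i"])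
    show "Mx (prA s) (?th \<sigma>) - ?th \<sigma> \<bullet> a = (\<Sum>i\<in>UNIV. \<epsilon> i * s i - (if \<sigma> i then \<epsilon> i else - \<epsilon> i) * a $ i)" for \<sigma>
      using e0 by (simp add: prMx[OF s0] less_imp_le prTh_inner sum_subtractf)
    show "?g i * min x y \<le> x * (\<epsilon> i * s i - (if \<sigma> i then \<epsilon> i else - \<epsilon> i) * a $ i)
          + y * (\<epsilon> i * s i - (if (\<sigma>(i := False)) i then \<epsilon> i else - \<epsilon> i) * a $ i)"
      if si: "\<sigma> i" and x: "0 \<le> x" and y: "0 \<le> y" for i \<sigma> x y
    proof -
      let ?c1 = "\<epsilon> i * s i - \<epsilon> i * a $ i" and ?c2 = "\<epsilon> i * s i + \<epsilon> i * a $ i"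
      have c1: "0 \<le> ?c1" and c2: "0 \<le> ?c2"
        using prA_coord[OF a, of i] e0[of i] s0[of i] by auto
      have "min x y * ?c1 \<le> x * ?c1" by (rule mult_right_mono[OF _ c1]) simp
      moreover have "min x y * ?c2 \<le> y * ?c2" by (rule mult_right_mono[OF _ c2]) simp
      moreover have "?g i * min x y = min x y * ?c1 + min x y * ?c2" by (simp add: algebra_simps)
      ultimately show ?thesis using si by simp
    qed
    show "0 \<le> ?g i" for i by (rule g0)
    show "0 \<le> l \<sigma>" for \<sigma> by (rule l0)
  qed
  obtain \<sigma> where sg: "(\<Sum>i\<in>UNIV. prod_list (map (?q i) (offline_arms (prA s) \<pi> Toff)) * cc ?g ?r T i) / 4
           \<le> regret (prA s) \<pi> (?th \<sigma>) Toff T S"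
    using core_apply[OF adm fin ne R g0 r0 ron q0 affc] by blast
  have "prod_list (map (?q i) (offline_arms (prA s) \<pi> Toff))
      = aff (2 * \<epsilon> i * s i) ^ length (filter (\<lambda>b. \<not> b $ i = 0) (offline_arms (prA s) \<pi> Toff))" for i
    by (rule prod_list_pow)
  then show ?thesis using sg by (intro exI[of _ \<sigma>]) simp
qed


lemma sqrt_ratio:
  assumes T: "0 < T" and X: "0 \<le> X"
  shows "sqrt T / sqrt (1 + X / T) = T / sqrt (T + X)"
proof -
  have "1 + X / T = (T + X) / T" using T by (simp add: field_simps)
  then have h: "sqrt (1 + X / T) = sqrt (T + X) / sqrt T" by (simp add: real_sqrt_divide)
  have "sqrt T / sqrt (1 + X / T) = sqrt T / (sqrt (T + X) / sqrt T)" by (simp only: h)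
  also have "\<dots> = (sqrt T * sqrt T) / sqrt (T + X)" by (simp only: divide_divide_eq_right)
  also have "sqrt T * sqrt T = T" using T by simp
  finally show ?thesis .
qed

lemma num_main:
  fixes T m :: nat and X G :: real
  assumes T1: "1 \<le> T" and X0: "0 \<le> X" and mX: "real m \<le> X"
    and G: "1 / (2 * sqrt (real T + X)) / 2 \<le> G"
  shows "exp (-2) / 8 * (sqrt (real T) / sqrt (1 + X / real T))
     \<le> G * real T * aff (1 / (2 * sqrt (real T + X))) ^ T * aff (1 / (2 * sqrt (real T + X))) ^ m / 4"
proof -
  define N where "N = real T + X"
  define \<delta> where "\<delta> = 1 / (2 * sqrt N)"
  have N1: "1 \<le> N" using T1 X0 by (simp add: N_def)
  have sN: "0 < sqrt N" using N1 by simp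
  have d0: "0 < \<delta>" using sN by (simp add: \<delta>_def)
  have dsq: "\<delta>\<^sup>2 = 1 / (4 * N)" using N1 by (simp add: \<delta>_def power2_eq_square field_simps)
  have dsq2: "\<delta>\<^sup>2 \<le> 1/2" unfolding dsq using N1 by (simp add: field_simps)
  define \<rho> where "\<rho> = exp (- 2 * \<delta>\<^sup>2)"
  have rho_le: "\<rho> \<le> aff \<delta>" unfolding \<rho>_def by (rule aff_lower[OF dsq2])
  have rho0: "0 \<le> \<rho>" by (simp add: \<rho>_def)
  have "\<rho> ^ T * \<rho> ^ m = exp (real T * (- 2 * \<delta>\<^sup>2)) * exp (real m * (- 2 * \<delta>\<^sup>2))"
    unfolding \<rho>_def by (simp only: exp_of_nat_mult)
  also have "\<dots> = exp (- 2 * \<delta>\<^sup>2 * (real T + real m))"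
    by (simp only: exp_add[symmetric]) (simp add: algebra_simps)
  also have "\<dots> \<ge> exp (- 1 / 2)"
  proof -
    have "2 * \<delta>\<^sup>2 * (real T + real m) \<le> 2 * \<delta>\<^sup>2 * N"
      using mX by (intro mult_left_mono) (auto simp: N_def)
    also have "\<dots> = 1 / 2" unfolding dsq using N1 by (simp add: field_simps)
    finally show ?thesis by simp
  qed
  finally have pw0: "exp (- 1 / 2) \<le> \<rho> ^ T * \<rho> ^ m" .
  have p1: "\<rho> ^ T \<le> aff \<delta> ^ T" by (rule power_mono[OF rho_le rho0])
  have p2: "\<rho> ^ m \<le> aff \<delta> ^ m" by (rule power_mono[OF rho_le rho0])
  have "\<rho> ^ T * \<rho> ^ m \<le> aff \<delta> ^ T * aff \<delta> ^ m"
    by (rule mult_mono[OF p1 p2]) (simp_all add: aff_nonneg rho0)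
  then have pw: "exp (- 1 / 2) \<le> aff \<delta> ^ T * aff \<delta> ^ m" using pw0 by linarith
  have "0 \<le> 1 / (2 * sqrt (real T + X)) / 2" using X0 by simp
  then have G0: "0 \<le> G" using G by linarith
  have "G * real T * (aff \<delta> ^ T * aff \<delta> ^ m) / 4 \<ge> (\<delta> / 2) * real T * exp (- 1 / 2) / 4"
  proof -
    have "(\<delta> / 2) * real T * exp (- 1 / 2) \<le> G * real T * (aff \<delta> ^ T * aff \<delta> ^ m)"
      using G pw G0 by (intro mult_mono) (auto simp: \<delta>_def N_def)
    then show ?thesis by simp
  qed
  moreover have "exp (-2) / 8 * (sqrt (real T) / sqrt (1 + X / real T)) \<le> (\<delta> / 2) * real T * exp (- 1 / 2) / 4"
  proof -
    have e: "2 * exp (-2) \<le> exp (- 1 / 2 :: real)"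
    proof -
      have "2 \<le> exp (3 / 2 :: real)" using exp_ge_add_one_self[of "3/2::real"] by simp
      then have "2 * exp (-2) \<le> exp (3/2) * exp (-2 :: real)" by simp
      also have "\<dots> = exp (- 1 / 2)" by (simp add: exp_add[symmetric])
      finally show ?thesis .
    qed
    have "sqrt (real T) / sqrt (1 + X / real T) = real T / sqrt N"
      unfolding N_def by (rule sqrt_ratio) (use T1 X0 in auto)
    moreover have "(\<delta> / 2) * real T * exp (- 1 / 2) / 4 = real T / sqrt N * (exp (- 1 / 2) / 16)"
      by (simp add: \<delta>_def field_simps)
    moreover have "exp (-2) / 8 * (real T / sqrt N) \<le> real T / sqrt N * (exp (- 1 / 2) / 16)"
    proof -
      have K0: "0 \<le> real T / sqrt N" using sN by simp
      have e2: "exp (-2) / 8 \<le> exp (- 1 / 2) / (16::real)" using e by simp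
      have "exp (-2) / 8 * (real T / sqrt N) \<le> exp (- 1 / 2) / 16 * (real T / sqrt N)"
        by (rule mult_right_mono[OF e2 K0])
      then show ?thesis by (simp only: mult.commute)
    qed
    ultimately show ?thesis by simp
  qed
  moreover have dN: "1 / (2 * sqrt (real T + X)) = \<delta>" by (simp add: \<delta>_def N_def)
  moreover have "G * real T * aff \<delta> ^ T * aff \<delta> ^ m / 4 = G * real T * (aff \<delta> ^ T * aff \<delta> ^ m) / 4"
    by (simp only: mult.assoc)
  ultimately show ?thesis by (simp only:)
qed


lemma sup_ge:
  "in_class Toff v A \<pi> \<theta> \<Longrightarrow> ereal (regret A \<pi> \<theta> Toff T S)
     \<le> (SUP p\<in>{(A, \<pi>, \<theta>). in_class Toff v A \<pi> \<theta>}. ereal (regret (fst p) (fst (snd p)) (snd (snd p)) Toff T S))"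
  by (rule SUP_upper2[of "(A, \<pi>, \<theta>)"]) auto

lemma ax_count:
  fixes j0 :: "'d::finite" and idx :: "'d \<Rightarrow> nat"
  assumes pos: "\<And>a. 0 \<le> axPi idx v a"
  shows "real (length (filter (\<lambda>b. \<not> b $ j0 = 0) (offline_arms axA (axPi idx v) Toff))) \<le> real Toff * v (idx j0)"
proof -
  have "real (length (filter (\<lambda>b. \<not> b $ j0 = 0) (offline_arms axA (axPi idx v) Toff)))
      \<le> real Toff * (\<Sum>a\<in>axA. axPi idx v a * (if \<not> a $ j0 = 0 then 1 else 0))"
    by (rule offline_count_bound) (auto simp: axA_def pos)
  also have "(\<Sum>a\<in>axA. axPi idx v a * (if \<not> a $ j0 = 0 then 1 else 0)) = v (idx j0)"
  proof -
    have "(\<Sum>a\<in>axA. axPi idx v a * (if \<not> a $ j0 = 0 then 1 else 0))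
        = (\<Sum>j\<in>UNIV. axPi idx v (ax j) * (if \<not> ax j $ j0 = 0 then 1 else 0))"
      unfolding sum_axA by simp
    also have "\<dots> = (\<Sum>j\<in>UNIV. if j = j0 then v (idx j) else 0)"
      by (rule sum.cong) (auto simp: axPi_ax ax_nth)
    finally show ?thesis by simp
  qed
  finally show ?thesis .
qed

lemma pr_count:
  fixes s p :: "'d::finite \<Rightarrow> real"
  assumes s0: "\<And>k. 0 < s k" and pos: "\<And>a. 0 \<le> prPi s p a"
  shows "real (length (filter (\<lambda>b. \<not> b $ i = 0) (offline_arms (prA s) (prPi s p) Toff))) \<le> real Toff * p i"
proof -
  have "real (length (filter (\<lambda>b. \<not> b $ i = 0) (offline_arms (prA s) (prPi s p) Toff)))
      \<le> real Toff * (\<Sum>a\<in>prA s. prPi s p a * (if \<not> a $ i = 0 then 1 else 0))"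
    by (rule offline_count_bound) (auto simp: finite_prA pos)
  also have "(\<Sum>a\<in>prA s. prPi s p a * (if \<not> a $ i = 0 then 1 else 0)) = p i"
    using sum_box_one[OF s0, where p = p and G = "\<lambda>x. if \<not> x = 0 then 1 else 0" and i = i] s0[of i]
    by simp
  finally show ?thesis .
qed

lemma idx_zero:
  assumes bij: "bij_betw idx (UNIV::'d::finite set) {..<CARD('d)}"
  obtains j0 where "idx j0 = 0"
proof -
  have "0 \<in> {..<CARD('d)}" by simp
  then have "0 \<in> idx ` UNIV" using bij by (simp add: bij_betw_def)
  then obtain j where "0 = idx j" by blast
  then show ?thesis using that by simp
qed

lemma case_inf:
  fixes idx :: "'d::finite \<Rightarrow> nat" and v :: "nat \<Rightarrow> real"
  assumes bij: "bij_betw idx (UNIV::'d set) {..<CARD('d)}"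
    and v0: "\<forall>i<CARD('d). 0 \<le> v i \<and> v i \<le> 1" and vs: "(\<Sum>i<CARD('d). v i) \<le> 1"
    and mono: "\<forall>i j. i \<le> j \<longrightarrow> j < CARD('d) \<longrightarrow> v i \<le> v j"
    and T1: "1 \<le> T" and adm: "admissible S" and v00: "v 0 = 0"
  shows "\<exists>A \<pi> (\<theta>::'d arm). in_class Toff v A \<pi> \<theta> \<and> B \<le> regret A \<pi> \<theta> Toff T S"
proof -
  obtain j0 where j0: "idx j0 = 0" using idx_zero[OF bij] by blast
  define \<epsilon> where "\<epsilon> = max 1 (4 * B)"
  have e: "0 < \<epsilon>" by (simp add: \<epsilon>_def)
  let ?\<pi> = "axPi idx v"
  have cls: "in_class Toff v axA ?\<pi> \<theta>" for \<theta> :: "'d arm" by (rule ax_in_class[OF bij v0 vs mono])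
  have pos: "0 \<le> ?\<pi> a" for a using cls[of 0] by (simp add: in_class_def)
  obtain \<sigma> where s: "cc (\<lambda>i. if i = j0 then \<epsilon> else 0) (\<lambda>_. aff (2 * \<epsilon>)) T j0
            * aff (2 * \<epsilon>) ^ length (filter (\<lambda>b. \<not> b $ j0 = 0) (offline_arms axA ?\<pi> Toff)) / 4
           \<le> regret axA ?\<pi> (axTh j0 \<epsilon> \<sigma>) Toff T S"
    using ax_regret[OF adm e, of j0 T ?\<pi> Toff] by blast
  have "real (length (filter (\<lambda>b. \<not> b $ j0 = 0) (offline_arms axA ?\<pi> Toff))) \<le> real Toff * v (idx j0)"
    by (rule ax_count[OF pos])
  then have n0: "length (filter (\<lambda>b. \<not> b $ j0 = 0) (offline_arms axA ?\<pi> Toff)) = 0"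
    using j0 v00 by simp
  have "\<epsilon> \<le> cc (\<lambda>i. if i = j0 then \<epsilon> else 0) (\<lambda>_. aff (2 * \<epsilon>)) T j0"
    using cc_ge_g[of "\<lambda>i. if i = j0 then \<epsilon> else 0" "\<lambda>_. aff (2 * \<epsilon>)" T j0] e T1 aff_nonneg by auto
  then have "\<epsilon> / 4 \<le> regret axA ?\<pi> (axTh j0 \<epsilon> \<sigma>) Toff T S" using s n0 by simp
  moreover have "B \<le> \<epsilon> / 4" by (simp add: \<epsilon>_def)
  ultimately have "B \<le> regret axA ?\<pi> (axTh j0 \<epsilon> \<sigma>) Toff T S" by linarith
  then show ?thesis using cls by blast
qed

lemma case_d1:
  fixes idx :: "'d::finite \<Rightarrow> nat" and v w :: "nat \<Rightarrow> real"
  assumes bij: "bij_betw idx (UNIV::'d set) {..<CARD('d)}"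
    and v0: "\<forall>i<CARD('d). 0 \<le> v i \<and> v i \<le> 1" and vs: "(\<Sum>i<CARD('d). v i) \<le> 1"
    and mono: "\<forall>i j. i \<le> j \<longrightarrow> j < CARD('d) \<longrightarrow> v i \<le> v j"
    and T1: "1 \<le> T" and adm: "admissible S" and d1: "CARD('d) = 1"
    and ws: "(\<Sum>i<CARD('d). w i) = 1"
  shows "\<exists>A \<pi> (\<theta>::'d arm). in_class Toff v A \<pi> \<theta> \<and>
     sqrt (real T) * exp (-2) / 8 * (\<Sum>i<CARD('d). 1 / sqrt (1 + (real Toff / real T) * (v i / w i)))
       \<le> regret A \<pi> \<theta> Toff T S"
proof -
  obtain j0 where j0: "idx j0 = 0" using idx_zero[OF bij] by blast
  have w1: "w 0 = 1" using ws d1 by simp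
  define X where "X = real Toff * v 0"
  have X0: "0 \<le> X" using v0 d1 by (simp add: X_def)
  define \<delta> where "\<delta> = 1 / (2 * sqrt (real T + X))"
  define \<epsilon> where "\<epsilon> = \<delta> / 2"
  have d0: "0 < \<delta>" using T1 X0 by (simp add: \<delta>_def)
  have e: "0 < \<epsilon>" using d0 by (simp add: \<epsilon>_def)
  have e2: "2 * \<epsilon> = \<delta>" by (simp add: \<epsilon>_def)
  let ?\<pi> = "axPi idx v"
  let ?n = "length (filter (\<lambda>b. \<not> b $ j0 = 0) (offline_arms axA ?\<pi> Toff))"
  have cls: "in_class Toff v axA ?\<pi> \<theta>" for \<theta> :: "'d arm" by (rule ax_in_class[OF bij v0 vs mono])
  have pos: "0 \<le> ?\<pi> a" for a using cls[of 0] by (simp add: in_class_def)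
  obtain \<sigma> where s: "cc (\<lambda>i. if i = j0 then \<epsilon> else 0) (\<lambda>_. aff (2 * \<epsilon>)) T j0
            * aff (2 * \<epsilon>) ^ ?n / 4 \<le> regret axA ?\<pi> (axTh j0 \<epsilon> \<sigma>) Toff T S"
    using ax_regret[OF adm e, of j0 T ?\<pi> Toff] by blast
  have nX: "real ?n \<le> X" using ax_count[OF pos, of j0 Toff] j0 by (simp add: X_def)
  have cl: "\<epsilon> * real T * aff \<delta> ^ T \<le> cc (\<lambda>i. if i = j0 then \<epsilon> else 0) (\<lambda>_. aff (2 * \<epsilon>)) T j0"
    using cc_lower[of "\<lambda>i. if i = j0 then \<epsilon> else 0" j0 "\<lambda>_. aff (2 * \<epsilon>)" T] e aff_nonneg aff_le1 e2 by simp
  have nm: "exp (-2) / 8 * (sqrt (real T) / sqrt (1 + X / real T)) \<le> \<epsilon> * real T * aff \<delta> ^ T * aff \<delta> ^ ?n / 4"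
    unfolding \<delta>_def by (rule num_main[OF T1 X0 nX]) (simp add: \<epsilon>_def \<delta>_def)
  have b: "\<epsilon> * real T * aff \<delta> ^ T * aff \<delta> ^ ?n / 4 \<le> cc (\<lambda>i. if i = j0 then \<epsilon> else 0) (\<lambda>_. aff (2 * \<epsilon>)) T j0 * aff \<delta> ^ ?n / 4"
    by (rule divide_right_mono[OF mult_right_mono[OF cl zero_le_power[OF aff_nonneg]]]) simp
  have c: "cc (\<lambda>i. if i = j0 then \<epsilon> else 0) (\<lambda>_. aff (2 * \<epsilon>)) T j0 * aff \<delta> ^ ?n / 4 \<le> regret axA ?\<pi> (axTh j0 \<epsilon> \<sigma>) Toff T S"
    using s unfolding e2 .
  have r: "exp (-2) / 8 * (sqrt (real T) / sqrt (1 + X / real T)) \<le> regret axA ?\<pi> (axTh j0 \<epsilon> \<sigma>) Toff T S"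
    using order_trans[OF nm order_trans[OF b c]] .
  have "sqrt (real T) * exp (-2) / 8 * (\<Sum>i<CARD('d). 1 / sqrt (1 + (real Toff / real T) * (v i / w i)))
      = exp (-2) / 8 * (sqrt (real T) / sqrt (1 + X / real T))"
    using d1 w1 by (simp add: X_def)
  then show ?thesis using r cls by (intro exI[of _ axA] exI[of _ ?\<pi>] exI[of _ "axTh j0 \<epsilon> \<sigma>"]) simp
qed

lemma case_prod:
  fixes idx :: "'d::finite \<Rightarrow> nat" and v w :: "nat \<Rightarrow> real"
  assumes bij: "bij_betw idx (UNIV::'d set) {..<CARD('d)}"
    and v0: "\<forall>i<CARD('d). 0 \<le> v i \<and> v i \<le> 1"
    and mono: "\<forall>i j. i \<le> j \<longrightarrow> j < CARD('d) \<longrightarrow> v i \<le> v j"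
    and T1: "1 \<le> T" and adm: "admissible S" and d2: "2 \<le> CARD('d)"
    and vpos: "\<forall>i<CARD('d). 0 < v i"
    and w0: "\<forall>i<CARD('d). 0 \<le> w i \<and> v i \<le> w i" and ws: "(\<Sum>i<CARD('d). w i) = 1"
  shows "\<exists>A \<pi> (\<theta>::'d arm). in_class Toff v A \<pi> \<theta> \<and>
     sqrt (real T) * exp (-2) / 8 * (\<Sum>i<CARD('d). 1 / sqrt (1 + (real Toff / real T) * (v i / w i)))
       \<le> regret A \<pi> \<theta> Toff T S"
proof -
  have idx_lt: "idx k < CARD('d)" for k using bij by (auto simp: bij_betw_def)
  have w0': "\<forall>i<CARD('d). 0 < w i \<and> v i \<le> w i" using w0 vpos by force
  define s where "s = (\<lambda>k. sqrt (w (idx k)))"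
  define p where "p = (\<lambda>k. v (idx k) / w (idx k))"
  define X where "X = (\<lambda>k. real Toff * p k)"
  define \<delta> where "\<delta> = (\<lambda>k. 1 / (2 * sqrt (real T + X k)))"
  define \<epsilon> where "\<epsilon> = (\<lambda>k. \<delta> k / (2 * s k))"
  have wpos: "0 < w (idx k)" for k using w0' idx_lt[of k] by auto
  have s0: "0 < s k" for k using wpos[of k] by (simp add: s_def)
  have p0: "0 \<le> p k" for k using v0 idx_lt[of k] wpos[of k] by (simp add: p_def)
  have X0: "0 \<le> X k" for k using p0[of k] by (simp add: X_def)
  have d0: "0 < \<delta> k" for k using X0[of k] T1 by (simp add: \<delta>_def)
  have e0: "0 < \<epsilon> k" for k using d0[of k] s0[of k] by (simp add: \<epsilon>_def)
  have es: "2 * \<epsilon> k * s k = \<delta> k" for k using s0[of k] by (simp add: \<epsilon>_def)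
  let ?\<pi> = "prPi s p"
  have cls: "in_class Toff v (prA s) ?\<pi> \<theta>" for \<theta> :: "'d arm"
    unfolding s_def p_def by (rule pr_in_class[OF bij v0 mono w0' ws d2])
  have pos: "0 \<le> ?\<pi> a" for a using cls[of 0] by (simp add: in_class_def)
  let ?n = "\<lambda>i. length (filter (\<lambda>b. \<not> b $ i = 0) (offline_arms (prA s) ?\<pi> Toff))"
  obtain \<sigma> where sg: "(\<Sum>i\<in>UNIV. aff (2 * \<epsilon> i * s i) ^ ?n i
              * cc (\<lambda>i. 2 * \<epsilon> i * s i) (\<lambda>i. aff (2 * \<epsilon> i * s i)) T i) / 4
           \<le> regret (prA s) ?\<pi> (prTh \<epsilon> \<sigma>) Toff T S"
    using pr_regret[where s = s and \<epsilon> = \<epsilon> and \<pi> = ?\<pi> and Toff = Toff and T = T, OF adm s0 e0] by blast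
  then have sg': "(\<Sum>i\<in>UNIV. aff (\<delta> i) ^ ?n i * cc \<delta> (\<lambda>i. aff (\<delta> i)) T i) / 4
           \<le> regret (prA s) ?\<pi> (prTh \<epsilon> \<sigma>) Toff T S"
    by (simp only: es)
  define tm where "tm = (\<lambda>k. exp (-2) / 8 * (sqrt (real T) / sqrt (1 + X k / real T)))"
  have each: "tm k \<le> aff (\<delta> k) ^ ?n k * cc \<delta> (\<lambda>i. aff (\<delta> i)) T k / 4" for k
  proof -
    have nX: "real (?n k) \<le> X k" using pr_count[OF s0 pos, of k Toff] by (simp add: X_def)
    have cl: "\<delta> k * real T * aff (\<delta> k) ^ T \<le> cc \<delta> (\<lambda>i. aff (\<delta> i)) T k"
      using cc_lower[of \<delta> k "\<lambda>i. aff (\<delta> i)" T] d0[of k] aff_nonneg aff_le1 by simp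
    have nm: "tm k \<le> \<delta> k * real T * aff (\<delta> k) ^ T * aff (\<delta> k) ^ ?n k / 4"
    proof -
      have y0: "0 \<le> 1 / (2 * sqrt (real T + X k))" using X0[of k] by simp
      have half: "\<And>y::real. 0 \<le> y \<Longrightarrow> y / 2 \<le> y" by simp
      show ?thesis unfolding tm_def \<delta>_def by (rule num_main[OF T1 X0 nX]) (rule half[OF y0])
    qed
    have b: "\<delta> k * real T * aff (\<delta> k) ^ T * aff (\<delta> k) ^ ?n k / 4 \<le> cc \<delta> (\<lambda>i. aff (\<delta> i)) T k * aff (\<delta> k) ^ ?n k / 4"
      by (rule divide_right_mono[OF mult_right_mono[OF cl zero_le_power[OF aff_nonneg]]]) simp
    show ?thesis using order_trans[OF nm b] by (simp add: mult.commute)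
  qed
  have "(\<Sum>k\<in>UNIV. tm k) \<le> (\<Sum>k\<in>UNIV. aff (\<delta> k) ^ ?n k * cc \<delta> (\<lambda>i. aff (\<delta> i)) T k / 4)"
    by (rule sum_mono) (rule each)
  also have "\<dots> = (\<Sum>i\<in>UNIV. aff (\<delta> i) ^ ?n i * cc \<delta> (\<lambda>i. aff (\<delta> i)) T i) / 4"
    by (rule sum_divide_distrib[symmetric])
  finally have tot: "(\<Sum>k\<in>UNIV. tm k) \<le> regret (prA s) ?\<pi> (prTh \<epsilon> \<sigma>) Toff T S" using sg' by linarith
  have "sqrt (real T) * exp (-2) / 8 * (\<Sum>i<CARD('d). 1 / sqrt (1 + (real Toff / real T) * (v i / w i)))
      = (\<Sum>i<CARD('d). sqrt (real T) * exp (-2) / 8 * (1 / sqrt (1 + (real Toff / real T) * (v i / w i))))"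
    by (rule sum_distrib_left)
  also have "\<dots> = (\<Sum>k\<in>(UNIV::'d set). sqrt (real T) * exp (-2) / 8 * (1 / sqrt (1 + (real Toff / real T) * (v (idx k) / w (idx k)))))"
    by (rule sum_reidx[OF bij, symmetric])
  also have "\<dots> = (\<Sum>k\<in>UNIV. tm k)"
  proof (rule sum.cong[OF refl])
    fix k
    have "(real Toff / real T) * (v (idx k) / w (idx k)) = X k / real T" by (simp add: X_def p_def)
    then show "sqrt (real T) * exp (-2) / 8 * (1 / sqrt (1 + (real Toff / real T) * (v (idx k) / w (idx k)))) = tm k"
      by (simp add: tm_def)
  qed
  finally show ?thesis using tot cls by (intro exI[of _ "prA s"] exI[of _ ?\<pi>] exI[of _ "prTh \<epsilon> \<sigma>"]) simp
qed

lemma ereal_sup_real: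
  fixes Y :: ereal and F :: "real set" and c :: real
  assumes Fne: "F \<noteq> {}" and bdd: "\<And>x. x \<in> F \<Longrightarrow> ereal (c * x) \<le> Y" and c0: "0 < c"
  shows "ereal (c * Sup F) \<le> Y"
proof (cases Y)
  case (real R)
  have "\<And>x. x \<in> F \<Longrightarrow> x \<le> R / c"
  proof -
    fix x assume "x \<in> F"
    then have "c * x \<le> R" using bdd real by simp
    then show "x \<le> R / c" using c0 by (simp add: field_simps mult.commute)
  qed
  then have "Sup F \<le> R / c" by (rule cSup_least[OF Fne])
  then have "c * Sup F \<le> R" using c0 by (simp add: field_simps mult.commute)
  then show ?thesis using real by simp
next
  case PInf
  then show ?thesis by simp
next
  case MInf
  obtain x where "x \<in> F" using Fne by blast
  then have "ereal (c * x) \<le> Y" by (rule bdd)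
  then show ?thesis using MInf by simp
qed

theorem proposition4p9:
  fixes v :: "nat \<Rightarrow> real" and T Toff :: nat
  assumes "T > 0" and "Toff > 0"
    and "\<forall>i < CARD('d). 0 \<le> v i \<and> v i \<le> 1"
    and "(\<Sum>i < CARD('d). v i) \<le> 1"
    and "\<forall>i j. i \<le> j \<longrightarrow> j < CARD('d) \<longrightarrow> v i \<le> v j"
  shows "ereal (sqrt (real T) * exp (-2) / 8 *
           Sup {(\<Sum>i < CARD('d). 1 / sqrt (1 + (real Toff / real T) * (v i / w i))) | w.
                  (\<forall>i < CARD('d). 0 \<le> w i \<and> v i \<le> w i) \<and> (\<Sum>i < CARD('d). w i) = 1})
         \<le> minimax_regret TYPE('d::finite) v Toff T"
proof -
  note T0 = assms(1) and v0 = assms(3) and vs = assms(4) and mono = assms(5)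
  define c where "c = sqrt (real T) * exp (-2) / 8"
  define F where "F = {(\<Sum>i < CARD('d). 1 / sqrt (1 + (real Toff / real T) * (v i / w i))) | w.
                  (\<forall>i < CARD('d). 0 \<le> w i \<and> v i \<le> w i) \<and> (\<Sum>i < CARD('d). w i) = 1}"
  obtain idx :: "'d \<Rightarrow> nat" where bij: "bij_betw idx UNIV {..<CARD('d)}"
    using ex_bij_betw_finite_nat[of "UNIV :: 'd set"] by (auto simp: atLeast0LessThan)
  have dpos: "0 < CARD('d)" by simp
  have T1: "1 \<le> T" using T0 by simp
  have c0: "0 < c" using T0 by (simp add: c_def)
  have Fne: "F \<noteq> {}"
  proof -
    define w where "w i = v i + (if i = 0 then 1 - (\<Sum>i < CARD('d). v i) else 0)" for i
    have "(\<Sum>i < CARD('d). w i) = (\<Sum>i < CARD('d). v i) + (\<Sum>i < CARD('d). if i = 0 then 1 - (\<Sum>i < CARD('d). v i) else 0)"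
      by (simp add: w_def sum.distrib)
    also have "\<dots> = 1" using dpos by simp
    finally have "(\<Sum>i < CARD('d). w i) = 1" .
    moreover have "\<forall>i < CARD('d). 0 \<le> w i \<and> v i \<le> w i" using v0 vs by (auto simp: w_def)
    ultimately have "(\<Sum>i < CARD('d). 1 / sqrt (1 + (real Toff / real T) * (v i / w i))) \<in> F"
      unfolding F_def by blast
    then show ?thesis by blast
  qed
  have key: "ereal (c * Sup F) \<le> (SUP p\<in>{(A, \<pi>, \<theta>). in_class Toff v A \<pi> (\<theta>::'d arm)}.
        ereal (regret (fst p) (fst (snd p)) (snd (snd p)) Toff T S))" if adm: "admissible S" for S
  proof (cases "v 0 = 0")
    case True
    have "ereal B \<le> (SUP p\<in>{(A, \<pi>, \<theta>). in_class Toff v A \<pi> (\<theta>::'d arm)}.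
        ereal (regret (fst p) (fst (snd p)) (snd (snd p)) Toff T S))" for B
    proof -
      obtain A \<pi> and \<theta> :: "'d arm" where cls: "in_class Toff v A \<pi> \<theta>" and r: "B \<le> regret A \<pi> \<theta> Toff T S"
        using case_inf[OF bij v0 vs mono T1 adm True] by blast
      have "ereal B \<le> ereal (regret A \<pi> \<theta> Toff T S)" using r by simp
      then show ?thesis using order_trans[OF _ sup_ge[OF cls]] by blast
    qed
    then have "(SUP p\<in>{(A, \<pi>, \<theta>). in_class Toff v A \<pi> (\<theta>::'d arm)}.
        ereal (regret (fst p) (fst (snd p)) (snd (snd p)) Toff T S)) = \<infinity>"
      by (rule ereal_top)
    then show ?thesis by simp
  next
    case False
    then have v00: "0 < v 0" using v0 dpos by force
    have vpos: "\<forall>i<CARD('d). 0 < v i"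
    proof (intro allI impI)
      fix i assume "i < CARD('d)"
      then have "v 0 \<le> v i" using mono by auto
      then show "0 < v i" using v00 by linarith
    qed
    show ?thesis
    proof (rule ereal_sup_real[OF Fne _ c0])
      fix x assume "x \<in> F"
      then obtain w where x: "x = (\<Sum>i < CARD('d). 1 / sqrt (1 + (real Toff / real T) * (v i / w i)))"
        and w0: "\<forall>i < CARD('d). 0 \<le> w i \<and> v i \<le> w i" and ws: "(\<Sum>i < CARD('d). w i) = 1"
        unfolding F_def by blast
      have "\<exists>A \<pi> (\<theta>::'d arm). in_class Toff v A \<pi> \<theta> \<and> c * x \<le> regret A \<pi> \<theta> Toff T S"
      proof (cases "CARD('d) = 1")
        case True
        show ?thesis unfolding x c_def by (rule case_d1[OF bij v0 vs mono T1 adm True ws])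
      next
        case False
        then have d2: "2 \<le> CARD('d)" using dpos by linarith
        show ?thesis unfolding x c_def by (rule case_prod[OF bij v0 mono T1 adm d2 vpos w0 ws])
      qed
      then obtain A \<pi> and \<theta> :: "'d arm" where cls: "in_class Toff v A \<pi> \<theta>" and r: "c * x \<le> regret A \<pi> \<theta> Toff T S"
        by blast
      have "ereal (c * x) \<le> ereal (regret A \<pi> \<theta> Toff T S)" using r by simp
      then show "ereal (c * x) \<le> (SUP p\<in>{(A, \<pi>, \<theta>). in_class Toff v A \<pi> (\<theta>::'d arm)}.
        ereal (regret (fst p) (fst (snd p)) (snd (snd p)) Toff T S))"
        using order_trans[OF _ sup_ge[OF cls]] by blast
    qed
  qed
  show ?thesis
    unfolding minimax_regret_def c_def[symmetric] F_def[symmetric]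
    by (rule INF_greatest) (rule key, simp)
qed


end
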